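(* Let $\mathcal P_Y$ be the $\mathbb Q(b)$-span of the monomials $p_\lambda$ and $y_ip_\lambda$ ($i\ge0$, $\lambda$ a partition). Then, as operators on $\mathcal P_Y$: $$[D_\alpha+D'_\alpha,\Lambda_Y]=0,\qquad [D_\alpha+D'_\alpha,Y_+]=Y_+\Lambda_Y,\qquad \Theta_Y(D_\alpha+D'_\alpha)=D_\alpha\Theta_Y.$$
   Context: $b$ indeterminate, $\alpha=1+b$, $p_\lambda=\prod_ip_{\lambda_i}$. Operators: $\Theta_Y=\sum_{i\ge1}p_i\frac{\partial}{\partial y_i}$; $Y_+=\sum_{i\ge0}y_{i+1}\frac{\partial}{\partial y_i}$; $\Lambda_Y=(1+b)\sum_{i,j\ge1}iy_{i+j-1}\frac{\partial^2}{\partial p_i\partial y_{j-1}}+\sum_{i,j\ge1}y_{i-1}p_j\frac{\partial}{\partial y_{i+j-1}}+b\sum_{i\ge0}iy_i\frac{\partial}{\partial y_i}$; $D_\alpha=\frac12\big((1+b)\sum_{i,j\ge1}ijp_{i+j}\frac{\partial^2}{\partial p_i\partial p_j}+\sum_{i,j\ge1}(i+j)p_ip_j\frac{\partial}{\partial p_{i+j}}+b\sum_{i\ge1}i(i-1)p_i\frac{\partial}{\partial p_i}\big)$; $D'_\alpha=\frac12\big((1+b)\sum_{i,j\ge1}2ij\,y_{i+j}\frac{\partial^2}{\partial y_i\partial p_j}+\sum_{i,j\ge1}2i\,y_ip_j\frac{\partial}{\partial y_{i+j}}+b\sum_{i\ge1}i(i-1)y_i\frac{\partial}{\partial y_i}\big)$.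 $[A,B]=AB-BA$. *)

theory Defs
  imports "HOL-Library.Poly_Mapping" "HOL-Computational_Algebra.Polynomial"
          "HOL-Computational_Algebra.Fraction_Field"
begin

type_synonym coef = "rat poly fract"

definition bb :: coef where "bb = Fract [:0, 1:] 1"

datatype var = P nat | Y nat

type_synonym mpoly = "(var \<Rightarrow>\<^sub>0 nat) \<Rightarrow>\<^sub>0 coef"

definition var_poly :: "var \<Rightarrow> mpoly" where
  "var_poly v = Poly_Mapping.single (Poly_Mapping.single v 1) 1"

abbreviation pp :: "nat \<Rightarrow> mpoly" where "pp i \<equiv> var_poly (P i)"
abbreviation yy :: "nat \<Rightarrow> mpoly" where "yy i \<equiv> var_poly (Y i)"

definition const :: "coef \<Rightarrow> mpoly" where
  "const c = Poly_Mapping.single 0 c"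

definition pderiv_var :: "var \<Rightarrow> mpoly \<Rightarrow> mpoly" where
  "pderiv_var v f = (\<Sum>m\<in>Poly_Mapping.keys f.
      Poly_Mapping.single (m - Poly_Mapping.single v (1::nat))
        (of_nat (Poly_Mapping.lookup m v) * Poly_Mapping.lookup f m))"

abbreviation dP :: "nat \<Rightarrow> mpoly \<Rightarrow> mpoly" where "dP i \<equiv> pderiv_var (P i)"
abbreviation dY :: "nat \<Rightarrow> mpoly \<Rightarrow> mpoly" where "dY i \<equiv> pderiv_var (Y i)"

fun var_idx :: "var \<Rightarrow> nat" where
  "var_idx (P i) = i" | "var_idx (Y i) = i"

text \<open>The infinite sums defining the
  operators below are locally finite: all terms with an index beyond N f + 1 vanish on f,
  so summing over indices up to N f + 1 gives the operator exactly.\<close>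
definition bnd :: "mpoly \<Rightarrow> nat" where
  "bnd f = Max (insert 0 (var_idx ` (\<Union>m\<in>Poly_Mapping.keys f. Poly_Mapping.keys m))) + 1"

definition Theta_Y :: "mpoly \<Rightarrow> mpoly" where
  "Theta_Y f = (\<Sum>i\<in>{1..bnd f}. pp i * dY i f)"

definition Y_plus :: "mpoly \<Rightarrow> mpoly" where
  "Y_plus f = (\<Sum>i\<in>{0..bnd f}. yy (i+1) * dY i f)"

definition Lambda_Y :: "mpoly \<Rightarrow> mpoly" where
  "Lambda_Y f =
     const (1 + bb) * (\<Sum>i\<in>{1..bnd f}. \<Sum>j\<in>{1..bnd f}.
         of_nat i * yy (i+j-1) * dP i (dY (j-1) f))
   + (\<Sum>i\<in>{1..bnd f}. \<Sum>j\<in>{1..bnd f}. yy (i-1) * pp j * dY (i+j-1) f)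
   + const bb * (\<Sum>i\<in>{0..bnd f}. of_nat i * yy i * dY i f)"

definition D_alpha :: "mpoly \<Rightarrow> mpoly" where
  "D_alpha f = const (1/2) *
     ( const (1 + bb) * (\<Sum>i\<in>{1..bnd f}. \<Sum>j\<in>{1..bnd f}.
           of_nat (i*j) * pp (i+j) * dP i (dP j f))
     + (\<Sum>i\<in>{1..bnd f}. \<Sum>j\<in>{1..bnd f}. of_nat (i+j) * pp i * pp j * dP (i+j) f)
     + const bb * (\<Sum>i\<in>{1..bnd f}. of_nat (i*(i-1)) * pp i * dP i f))"

definition D'_alpha :: "mpoly \<Rightarrow> mpoly" where
  "D'_alpha f = const (1/2) *
     ( const (1 + bb) * (\<Sum>i\<in>{1..bnd f}. \<Sum>j\<in>{1..bnd f}.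
           of_nat (2*i*j) * yy (i+j) * dY i (dP j f))
     + (\<Sum>i\<in>{1..bnd f}. \<Sum>j\<in>{1..bnd f}. of_nat (2*i) * yy i * pp j * dY (i+j) f)
     + const bb * (\<Sum>i\<in>{1..bnd f}. of_nat (i*(i-1)) * yy i * dY i f))"

text \<open>The space P_Y: Q(b)-span of the monomials p_lambda and y_i p_lambda, i.e.
  polynomials all of whose monomials avoid p_0 and have total y-degree at most 1.\<close>
definition PY :: "mpoly set" where
  "PY = {f. \<forall>m\<in>Poly_Mapping.keys f. Poly_Mapping.lookup m (P 0) = 0 \<and>
                      (\<Sum>v\<in>Poly_Mapping.keys m \<inter> range Y. Poly_Mapping.lookup m v) \<le> 1}"

definition commutator :: "(mpoly \<Rightarrow> mpoly) \<Rightarrow> (mpoly \<Rightarrow> mpoly) \<Rightarrow> mpoly \<Rightarrow> mpoly" where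
  "commutator A B = (\<lambda>f. A (B f) - B (A f))"

end

theory Submission
  imports Defs
begin

abbreviation dl :: "var \<Rightarrow> var \<Rightarrow>\<^sub>0 nat" where "dl v \<equiv> Poly_Mapping.single v 1"

lemma lookup_pderiv:
  "Poly_Mapping.lookup (pderiv_var v f) m
     = of_nat (Poly_Mapping.lookup m v + 1) * Poly_Mapping.lookup f (m + dl v)"
proof -
  have "Poly_Mapping.lookup (pderiv_var v f) m =
     (\<Sum>k\<in>Poly_Mapping.keys f. (if k = m + dl v then
         of_nat (Poly_Mapping.lookup k v) * Poly_Mapping.lookup f k else 0))"
    unfolding pderiv_var_def lookup_sum lookup_single
  proof (rule sum.cong[OF refl])
    fix k assume "k \<in> Poly_Mapping.keys f"
    show "(of_nat (Poly_Mapping.lookup k v) * Poly_Mapping.lookup f k when k - dl v = m)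
      = (if k = m + dl v then of_nat (Poly_Mapping.lookup k v) * Poly_Mapping.lookup f k else 0)"
    proof (cases "Poly_Mapping.lookup k v = 0")
      case True
      have "Poly_Mapping.lookup (m + dl v) v \<noteq> 0" by (simp add: lookup_add)
      then have "k \<noteq> m + dl v" using True by auto
      then show ?thesis using True by (simp add: when_def)
    next
      case False
      have "(k - dl v = m) = (k = m + dl v)"
        using False by (auto simp: poly_mapping_eq_iff lookup_add lookup_minus fun_eq_iff lookup_single when_def)
      then show ?thesis by (simp add: when_def)
    qed
  qed
  also have "\<dots> = of_nat (Poly_Mapping.lookup m v + 1) * Poly_Mapping.lookup f (m + dl v)"
    by (simp add: sum.delta lookup_add in_keys_iff)
  finally show ?thesis .
qed

lemma poly_mapping_sum_singles:
  "(f::'a \<Rightarrow>\<^sub>0 'b::comm_monoid_add) = (\<Sum>m\<in>Poly_Mapping.keys f. Poly_Mapping.single m (Poly_Mapping.lookup f m))"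
  by (rule poly_mapping_eqI) (simp add: lookup_sum lookup_single when_def sum.delta in_keys_iff)

lemma mpoly_induct[case_names zero single add]:
  fixes f :: "'a \<Rightarrow>\<^sub>0 'b::comm_monoid_add"
  assumes "Q 0" "\<And>m c. Q (Poly_Mapping.single m c)" "\<And>f g. Q f \<Longrightarrow> Q g \<Longrightarrow> Q (f + g)"
  shows "Q f"
proof -
  have "Q (\<Sum>m\<in>A. Poly_Mapping.single m (Poly_Mapping.lookup f m))" if "finite A" for A
    using that by (induction A rule: finite_induct) (auto intro: assms)
  then show ?thesis by (subst poly_mapping_sum_singles) simp
qed

lemma lookup_const_mult: "Poly_Mapping.lookup (const c * f) m = c * Poly_Mapping.lookup f m"
  unfolding const_def mult_map_scale_conv_mult[symmetric] by (simp add: map.rep_eq when_def)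

lemma const_add: "const (a + b) = const a + const b"
  by (simp add: const_def single_add)
lemma const_diff: "const (a - b) = const a - const b"
  by (simp add: const_def single_diff)
lemma const_mult: "const (a * b) = const a * const b"
  by (simp add: const_def mult_single)
lemma const_one[simp]: "const 1 = 1"
  by (simp add: const_def)
lemma const_zero[simp]: "const 0 = 0"
  by (simp add: const_def)
lemma of_nat_const: "(of_nat n :: mpoly) = const (of_nat n)"
  by (simp add: const_def)
lemma const_single: "const c * Poly_Mapping.single m d = Poly_Mapping.single m (c * d)"
  by (simp add: const_def mult_single)

lemma pderiv_add: "pderiv_var v (f + g) = pderiv_var v f + pderiv_var v g"
  by (rule poly_mapping_eqI) (simp add: lookup_pderiv lookup_add distrib_left)
lemma pderiv_diff: "pderiv_var v (f - g) = pderiv_var v f - pderiv_var v g"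
  by (rule poly_mapping_eqI) (simp add: lookup_pderiv lookup_minus right_diff_distrib)
lemma pderiv_uminus: "pderiv_var v (- f) = - pderiv_var v f"
  by (rule poly_mapping_eqI) (simp add: lookup_pderiv)
lemma pderiv_zero[simp]: "pderiv_var v 0 = 0"
  by (rule poly_mapping_eqI) (simp add: lookup_pderiv)
lemma pderiv_sum: "pderiv_var v (\<Sum>i\<in>A. F i) = (\<Sum>i\<in>A. pderiv_var v (F i))"
  by (induction A rule: infinite_finite_induct) (auto simp: pderiv_add)
lemma pderiv_const_mult: "pderiv_var v (const c * f) = const c * pderiv_var v f"
  by (rule poly_mapping_eqI) (simp add: lookup_pderiv lookup_const_mult)

lemma dl_sub_add: "0 < Poly_Mapping.lookup m v \<Longrightarrow> m - dl v + dl v = m"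
  by (rule poly_mapping_eqI) (auto simp: lookup_add lookup_minus lookup_single when_def)

lemma dl_eq_iff: "0 < Poly_Mapping.lookup m v \<Longrightarrow> (k + dl v = m) = (m - dl v = k)"
  using dl_sub_add[of m v] by (metis add_diff_cancel_right')

lemma pderiv_single:
  "pderiv_var v (Poly_Mapping.single m c) = Poly_Mapping.single (m - dl v) (of_nat (Poly_Mapping.lookup m v) * c)"
proof (rule poly_mapping_eqI)
  fix k
  show "Poly_Mapping.lookup (pderiv_var v (Poly_Mapping.single m c)) k =
    Poly_Mapping.lookup (Poly_Mapping.single (m - dl v) (of_nat (Poly_Mapping.lookup m v) * c)) k"
  proof (cases "Poly_Mapping.lookup m v = 0")
    case True
    have "Poly_Mapping.lookup (k + dl v) v \<noteq> 0" by (simp add: lookup_add)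
    then have "k + dl v \<noteq> m" using True by metis
    then show ?thesis using True by (simp add: lookup_pderiv lookup_single when_def)
  next
    case False
    then have F: "0 < Poly_Mapping.lookup m v" by simp
    show ?thesis
    proof (cases "m - dl v = k")
      case True
      then have "k + dl v = m" using dl_eq_iff[OF F] by simp
      moreover have "Poly_Mapping.lookup k v + 1 = Poly_Mapping.lookup m v"
        using True F by (auto simp: lookup_minus)
      ultimately show ?thesis using True by (simp add: lookup_pderiv)
    next
      case False
      then have "k + dl v \<noteq> m" using dl_eq_iff[OF F] by simp
      then show ?thesis using False by (simp add: lookup_pderiv lookup_single when_def)
    qed
  qed
qed

lemma pderiv_leibniz_single:
  "pderiv_var v (Poly_Mapping.single a c * Poly_Mapping.single b d) =
    pderiv_var v (Poly_Mapping.single a c) * Poly_Mapping.single b d + Poly_Mapping.single a c * pderiv_var v (Poly_Mapping.single b d)"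
proof -
  have e1: "Poly_Mapping.lookup a v \<noteq> 0 \<Longrightarrow> b + (a - dl v) = a + b - dl v"
    by (rule poly_mapping_eqI) (auto simp: lookup_add lookup_minus lookup_single when_def)
  have e2: "Poly_Mapping.lookup b v \<noteq> 0 \<Longrightarrow> a + (b - dl v) = a + b - dl v"
    by (rule poly_mapping_eqI) (auto simp: lookup_add lookup_minus lookup_single when_def)
  show ?thesis
  proof (cases "Poly_Mapping.lookup a v = 0"; cases "Poly_Mapping.lookup b v = 0")
    assume "Poly_Mapping.lookup a v = 0" "Poly_Mapping.lookup b v = 0"
    then show ?thesis by (simp add: mult_single pderiv_single lookup_add)
  next
    assume A: "Poly_Mapping.lookup a v = 0" "Poly_Mapping.lookup b v \<noteq> 0"
    have k: "a + b - dl v = a + (b - dl v)" using e2 A by simp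
    show ?thesis unfolding mult_single pderiv_single k using A by (simp add: lookup_add mult_ac)
  next
    assume A: "Poly_Mapping.lookup a v \<noteq> 0" "Poly_Mapping.lookup b v = 0"
    have k: "a + b - dl v = a - dl v + b" using e1 A by (simp add: add.commute)
    show ?thesis unfolding mult_single pderiv_single k using A by (simp add: lookup_add mult_ac)
  next
    assume A: "Poly_Mapping.lookup a v \<noteq> 0" "Poly_Mapping.lookup b v \<noteq> 0"
    have k1: "a - dl v + b = a + b - dl v" using e1 A by (simp add: add.commute)
    have k2: "a + (b - dl v) = a + b - dl v" using e2 A by simp
    show ?thesis unfolding mult_single pderiv_single k1 k2 single_add[symmetric]
      by (simp add: lookup_add mult_ac distrib_left distrib_right)
  qed
qed

lemma pderiv_mult: "pderiv_var v (f * g) = pderiv_var v f * g + f * pderiv_var v g"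
proof (induction f rule: mpoly_induct)
  case zero then show ?case by simp
next
  case (single m c)
  show ?case
  proof (induction g rule: mpoly_induct)
    case zero then show ?case by simp
  next
    case (single m' c') then show ?case by (rule pderiv_leibniz_single)
  next
    case (add f g) then show ?case by (simp add: distrib_left pderiv_add algebra_simps)
  qed
next
  case (add f1 f2) then show ?case by (simp add: distrib_right pderiv_add algebra_simps)
qed

lemma pderiv_var_poly: "pderiv_var v (var_poly w) = (if v = w then 1 else 0)"
  by (simp add: var_poly_def pderiv_single lookup_single when_def)

lemma pderiv_const[simp]: "pderiv_var v (const c) = 0"
  by (simp add: const_def pderiv_single)
lemma pderiv_one[simp]: "pderiv_var v 1 = 0"
  using pderiv_const[of v 1] by simp
lemma pderiv_of_nat[simp]: "pderiv_var v (of_nat n) = 0"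
  by (simp add: of_nat_const)

lemma pderiv_commute: "pderiv_var v (pderiv_var w f) = pderiv_var w (pderiv_var v f)"
proof (rule poly_mapping_eqI)
  fix m
  have e: "m + dl v + dl w = m + dl w + dl v" by (simp add: add.commute add.left_commute)
  show "Poly_Mapping.lookup (pderiv_var v (pderiv_var w f)) m = Poly_Mapping.lookup (pderiv_var w (pderiv_var v f)) m"
    by (cases "v = w") (simp_all add: lookup_pderiv lookup_add lookup_single e[simplified])
qed

definition vb :: "nat \<Rightarrow> mpoly \<Rightarrow> bool" where
  "vb N f \<longleftrightarrow> (\<forall>m\<in>Poly_Mapping.keys f. \<forall>v\<in>Poly_Mapping.keys m. var_idx v < N)"

lemma finite_vars: "finite (\<Union>m\<in>Poly_Mapping.keys (f::mpoly). Poly_Mapping.keys m)"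
  by simp

lemma vb_bnd: assumes "vb N f" "1 \<le> N" shows "bnd f \<le> N"
proof -
  have "Max (insert 0 (var_idx ` (\<Union>m\<in>Poly_Mapping.keys f. Poly_Mapping.keys m))) \<le> N - 1"
    using assms unfolding vb_def by (subst Max_le_iff) fastforce+
  then show ?thesis using assms(2) unfolding bnd_def by linarith
qed

lemma bnd_ge1: "1 \<le> bnd f" by (simp add: bnd_def)

lemma bnd_vb: "vb (bnd f) f"
  unfolding bnd_def vb_def
proof (intro ballI)
  fix m v assume "m \<in> Poly_Mapping.keys f" "v \<in> Poly_Mapping.keys m"
  then have "var_idx v \<le> Max (insert 0 (var_idx ` (\<Union>m\<in>Poly_Mapping.keys f. Poly_Mapping.keys m)))"
    by (intro Max_ge) auto
  then show "var_idx v < Max (insert 0 (var_idx ` (\<Union>m\<in>Poly_Mapping.keys f. Poly_Mapping.keys m))) + 1"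
    by simp
qed

lemma vb_mono: "vb N f \<Longrightarrow> N \<le> M \<Longrightarrow> vb M f"
  unfolding vb_def by fastforce

lemma vb_zero[simp]: "vb N 0" by (simp add: vb_def)
lemma vb_add: "vb N f \<Longrightarrow> vb N g \<Longrightarrow> vb N (f + g)"
  unfolding vb_def using keys_add[of f g] by blast
lemma vb_diff: "vb N f \<Longrightarrow> vb N g \<Longrightarrow> vb N (f - g)"
  unfolding vb_def using keys_diff[of f g] by blast
lemma vb_uminus: "vb N f \<Longrightarrow> vb N (- f)"
  unfolding vb_def by simp
lemma vb_sum: "(\<And>i. i \<in> A \<Longrightarrow> vb N (F i)) \<Longrightarrow> vb N (\<Sum>i\<in>A. F i)"
  unfolding vb_def using keys_sum[of F A] by blast
lemma keys_add_nat: "Poly_Mapping.keys ((a::var \<Rightarrow>\<^sub>0 nat) + b) = Poly_Mapping.keys a \<union> Poly_Mapping.keys b"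
  by (auto simp: in_keys_iff lookup_add)
lemma vb_mult: "vb N f \<Longrightarrow> vb N g \<Longrightarrow> vb N (f * g)"
  unfolding vb_def using keys_mult[of f g] by (fastforce simp: keys_add_nat)
lemma vb_const[simp]: "vb N (const c)"
  unfolding vb_def const_def by simp
lemma vb_one[simp]: "vb N 1"
  using vb_const[of N 1] by simp
lemma vb_of_nat[simp]: "vb N (of_nat n)"
  by (simp add: of_nat_const)
lemma vb_var: "var_idx v < N \<Longrightarrow> vb N (var_poly v)"
  unfolding vb_def var_poly_def by simp
lemma keys_minus_nat: "Poly_Mapping.keys ((a::var \<Rightarrow>\<^sub>0 nat) - b) \<subseteq> Poly_Mapping.keys a"
  by (auto simp: in_keys_iff lookup_minus)
lemma vb_pderiv: "vb N f \<Longrightarrow> vb N (pderiv_var v f)"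
  unfolding vb_def pderiv_var_def using keys_minus_nat
  by (auto dest!: subsetD[OF keys_sum] split: if_splits) blast

lemma pderiv_vanish: "vb N f \<Longrightarrow> N \<le> var_idx v \<Longrightarrow> pderiv_var v f = 0"
  unfolding pderiv_var_def vb_def
proof (intro sum.neutral ballI)
  fix m assume "m \<in> Poly_Mapping.keys f" and A: "\<forall>m\<in>Poly_Mapping.keys f. \<forall>v\<in>Poly_Mapping.keys m. var_idx v < N" "N \<le> var_idx v"
  then have "Poly_Mapping.lookup m v = 0" by (meson in_keys_iff leD)
  then show "Poly_Mapping.single (m - dl v) (of_nat (Poly_Mapping.lookup m v) * Poly_Mapping.lookup f m) = 0" by simp
qed

lemma pderiv_vanish_bnd: "bnd f \<le> var_idx v \<Longrightarrow> pderiv_var v f = 0"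
  using pderiv_vanish[OF bnd_vb] .

lemma sum_stable:
  fixes M N a :: nat
  shows "M \<le> N \<Longrightarrow> (\<And>i. M < i \<Longrightarrow> i \<le> N \<Longrightarrow> F i = 0) \<Longrightarrow> sum F {a..N} = sum F {a..M}"
proof (rule sum.mono_neutral_right)
  assume "M \<le> N" "\<And>i. M < i \<Longrightarrow> i \<le> N \<Longrightarrow> F i = 0"
  then show "\<forall>i\<in>{a..N} - {a..M}. F i = 0" by auto
qed auto

lemma dsum_stable:
  fixes M N a c :: nat
  assumes "M \<le> N" "\<And>i j. M < i \<or> M < j \<Longrightarrow> F i j = 0"
  shows "(\<Sum>i\<in>{a..N}. \<Sum>j\<in>{c..N}. F i j) = (\<Sum>i\<in>{a..M}. \<Sum>j\<in>{c..M}. F i j)"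
proof -
  have "(\<Sum>i\<in>{a..N}. \<Sum>j\<in>{c..N}. F i j) = (\<Sum>i\<in>{a..N}. \<Sum>j\<in>{c..M}. F i j)"
    by (rule sum.cong[OF refl], rule sum_stable) (use assms in auto)
  also have "\<dots> = (\<Sum>i\<in>{a..M}. \<Sum>j\<in>{c..M}. F i j)"
    by (rule sum_stable) (use assms in auto)
  finally show ?thesis .
qed

definition ThN :: "nat \<Rightarrow> mpoly \<Rightarrow> mpoly" where
  "ThN N f = (\<Sum>i\<in>{1..N}. pp i * dY i f)"
definition YpN :: "nat \<Rightarrow> mpoly \<Rightarrow> mpoly" where
  "YpN N f = (\<Sum>i\<in>{0..N}. yy (i+1) * dY i f)"
definition LaN :: "nat \<Rightarrow> mpoly \<Rightarrow> mpoly" where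
  "LaN N f =
     const (1 + bb) * (\<Sum>i\<in>{1..N}. \<Sum>j\<in>{1..N}.
         of_nat i * yy (i+j-1) * dP i (dY (j-1) f))
   + (\<Sum>i\<in>{1..N}. \<Sum>j\<in>{1..N}. yy (i-1) * pp j * dY (i+j-1) f)
   + const bb * (\<Sum>i\<in>{0..N}. of_nat i * yy i * dY i f)"
definition DN :: "nat \<Rightarrow> mpoly \<Rightarrow> mpoly" where
  "DN N f = const (1/2) *
     ( const (1 + bb) * (\<Sum>i\<in>{1..N}. \<Sum>j\<in>{1..N}.
           of_nat (i*j) * pp (i+j) * dP i (dP j f))
     + (\<Sum>i\<in>{1..N}. \<Sum>j\<in>{1..N}. of_nat (i+j) * pp i * pp j * dP (i+j) f)
     + const bb * (\<Sum>i\<in>{1..N}. of_nat (i*(i-1)) * pp i * dP i f))"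
definition D'N :: "nat \<Rightarrow> mpoly \<Rightarrow> mpoly" where
  "D'N N f = const (1/2) *
     ( const (1 + bb) * (\<Sum>i\<in>{1..N}. \<Sum>j\<in>{1..N}.
           of_nat (2*i*j) * yy (i+j) * dY i (dP j f))
     + (\<Sum>i\<in>{1..N}. \<Sum>j\<in>{1..N}. of_nat (2*i) * yy i * pp j * dY (i+j) f)
     + const bb * (\<Sum>i\<in>{1..N}. of_nat (i*(i-1)) * yy i * dY i f))"

lemma Theta_ThN: "Theta_Y f = ThN (bnd f) f" by (simp add: Theta_Y_def ThN_def)
lemma Yp_YpN: "Y_plus f = YpN (bnd f) f" by (simp add: Y_plus_def YpN_def)
lemma La_LaN: "Lambda_Y f = LaN (bnd f) f" by (simp add: Lambda_Y_def LaN_def)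
lemma D_DN: "D_alpha f = DN (bnd f) f" by (simp add: D_alpha_def DN_def)
lemma D'_D'N: "D'_alpha f = D'N (bnd f) f" by (simp add: D'_alpha_def D'N_def)

lemma vanish1: "bnd f \<le> var_idx v \<Longrightarrow> pderiv_var v f = 0"
  by (rule pderiv_vanish_bnd)
lemma vanish2: "bnd f \<le> var_idx v \<or> bnd f \<le> var_idx w \<Longrightarrow> pderiv_var v (pderiv_var w f) = 0"
  using pderiv_vanish[OF vb_pderiv[OF bnd_vb]] pderiv_vanish_bnd by fastforce

lemma dsum_stable2:
  fixes M N a c :: nat
  assumes "M \<le> N" "\<And>i j. M < i \<Longrightarrow> F i j = 0" "\<And>i j. M < j \<Longrightarrow> F i j = 0"
  shows "(\<Sum>i\<in>{a..N}. \<Sum>j\<in>{c..N}. F i j) = (\<Sum>i\<in>{a..M}. \<Sum>j\<in>{c..M}. F i j)"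
  by (rule dsum_stable) (use assms in auto)

lemma vanish2a: "bnd f \<le> var_idx v \<Longrightarrow> pderiv_var v (pderiv_var w f) = 0"
  using vanish2 by blast
lemma vanish2b: "bnd f \<le> var_idx w \<Longrightarrow> pderiv_var v (pderiv_var w f) = 0"
  using vanish2 by blast

lemmas stab_intros = arg_cong2[where f="(+)"] arg_cong2[where f="(*)"] refl dsum_stable2 sum_stable

lemma ThN_stable: assumes "bnd f \<le> N" shows "ThN N f = Theta_Y f"
  unfolding Theta_ThN ThN_def by (intro stab_intros assms) (auto simp: vanish1)
lemma YpN_stable: assumes "bnd f \<le> N" shows "YpN N f = Y_plus f"
  unfolding Yp_YpN YpN_def by (intro stab_intros assms) (auto simp: vanish1)
lemma LaN_stable: assumes "bnd f \<le> N" shows "LaN N f = Lambda_Y f"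
  unfolding La_LaN LaN_def by (intro stab_intros assms) (auto simp: vanish1 vanish2a vanish2b)
lemma DN_stable: assumes "bnd f \<le> N" shows "DN N f = D_alpha f"
  unfolding D_DN DN_def by (intro stab_intros assms) (auto simp: vanish1 vanish2a vanish2b)
lemma D'N_stable: assumes "bnd f \<le> N" shows "D'N N f = D'_alpha f"
  unfolding D'_D'N D'N_def by (intro stab_intros assms) (auto simp: vanish1 vanish2a vanish2b)

definition lin :: "(mpoly \<Rightarrow> mpoly) \<Rightarrow> bool" where
  "lin A \<longleftrightarrow> (\<forall>f g. A (f + g) = A f + A g) \<and> (\<forall>c f. A (const c * f) = const c * A f)"

lemma lin_add: "lin A \<Longrightarrow> A (f + g) = A f + A g" by (simp add: lin_def)
lemma lin_cmult: "lin A \<Longrightarrow> A (const c * f) = const c * A f" by (simp add: lin_def)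
lemma lin_zero: "lin A \<Longrightarrow> A 0 = 0"
  using lin_add[of A 0 0] by simp
lemma lin_uminus: assumes "lin A" shows "A (- f) = - A f"
proof -
  have "const (-1) = (-1 :: mpoly)" by (simp add: const_def single_uminus)
  then show ?thesis using lin_cmult[of A "-1" f] assms by simp
qed
lemma lin_diff: "lin A \<Longrightarrow> A (f - g) = A f - A g"
  using lin_add[of A f "- g"] lin_uminus[of A g] by simp
lemma lin_sum: "lin A \<Longrightarrow> A (\<Sum>i\<in>I. F i) = (\<Sum>i\<in>I. A (F i))"
  by (induction I rule: infinite_finite_induct) (auto simp: lin_zero lin_add)
lemma lin_of_nat: "lin A \<Longrightarrow> A (of_nat n * f) = of_nat n * A f"
  by (simp add: of_nat_const lin_cmult)

lemma lin_from_N: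
  assumes "\<And>f N. bnd f \<le> N \<Longrightarrow> AN N f = A f" "\<And>N. lin (AN N)"
  shows "lin A"
  unfolding lin_def
proof (intro conjI allI)
  fix f g
  let ?N = "max (bnd f) (bnd g)"
  have v: "vb ?N f" "vb ?N g" using bnd_vb vb_mono by (metis max.cobounded1 max.cobounded2)+
  have "1 \<le> ?N" using bnd_ge1[of f] by (simp add: le_max_iff_disj)
  then have "bnd (f + g) \<le> ?N" by (intro vb_bnd vb_add v)
  then have "A (f + g) = AN ?N (f + g)" using assms(1) by simp
  also have "\<dots> = AN ?N f + AN ?N g" using assms(2) lin_add by blast
  also have "\<dots> = A f + A g" using assms(1) by simp
  finally show "A (f + g) = A f + A g" .
next
  fix c f
  have "bnd (const c * f) \<le> bnd f" by (rule vb_bnd) (use bnd_vb vb_mult vb_const bnd_ge1 in auto)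
  then have "A (const c * f) = AN (bnd f) (const c * f)" using assms(1) by simp
  also have "\<dots> = const c * AN (bnd f) f" using assms(2) lin_cmult by blast
  also have "\<dots> = const c * A f" using assms(1) by simp
  finally show "A (const c * f) = const c * A f" .
qed

lemma lin_ThN: "lin (ThN N)"
  unfolding lin_def
proof (intro conjI allI)
  fix f g show "ThN N (f + g) = ThN N f + ThN N g"
    unfolding ThN_def by (simp add: pderiv_add distrib_left sum.distrib add_ac)
next
  fix c f show "ThN N (const c * f) = const c * ThN N f"
    unfolding ThN_def by (simp only: pderiv_const_mult) (simp add: sum_distrib_left distrib_left mult_ac)
qed
lemma lin_YpN: "lin (YpN N)"
  unfolding lin_def
proof (intro conjI allI)
  fix f g show "YpN N (f + g) = YpN N f + YpN N g"
    unfolding YpN_def by (simp add: pderiv_add distrib_left sum.distrib add_ac)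
next
  fix c f show "YpN N (const c * f) = const c * YpN N f"
    unfolding YpN_def by (simp only: pderiv_const_mult) (simp add: sum_distrib_left distrib_left mult_ac)
qed
lemma lin_LaN: "lin (LaN N)"
  unfolding lin_def
proof (intro conjI allI)
  fix f g show "LaN N (f + g) = LaN N f + LaN N g"
    unfolding LaN_def by (simp add: pderiv_add distrib_left sum.distrib add_ac)
next
  fix c f show "LaN N (const c * f) = const c * LaN N f"
    unfolding LaN_def by (simp only: pderiv_const_mult) (simp add: sum_distrib_left distrib_left mult_ac)
qed
lemma lin_DN: "lin (DN N)"
  unfolding lin_def
proof (intro conjI allI)
  fix f g show "DN N (f + g) = DN N f + DN N g"
    unfolding DN_def by (simp add: pderiv_add distrib_left sum.distrib add_ac)
next
  fix c f show "DN N (const c * f) = const c * DN N f"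
    unfolding DN_def by (simp only: pderiv_const_mult) (simp add: sum_distrib_left distrib_left mult_ac)
qed
lemma lin_D'N: "lin (D'N N)"
  unfolding lin_def
proof (intro conjI allI)
  fix f g show "D'N N (f + g) = D'N N f + D'N N g"
    unfolding D'N_def by (simp add: pderiv_add distrib_left sum.distrib add_ac)
next
  fix c f show "D'N N (const c * f) = const c * D'N N f"
    unfolding D'N_def by (simp only: pderiv_const_mult) (simp add: sum_distrib_left distrib_left mult_ac)
qed

lemma lin_Theta: "lin Theta_Y" by (rule lin_from_N[OF ThN_stable lin_ThN])
lemma lin_Yp: "lin Y_plus" by (rule lin_from_N[OF YpN_stable lin_YpN])
lemma lin_La: "lin Lambda_Y" by (rule lin_from_N[OF LaN_stable lin_LaN])
lemma lin_D: "lin D_alpha" by (rule lin_from_N[OF DN_stable lin_DN])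
lemma lin_D': "lin D'_alpha" by (rule lin_from_N[OF D'N_stable lin_D'N])

definition yfree :: "mpoly \<Rightarrow> bool" where "yfree f \<longleftrightarrow> (\<forall>k. dY k f = 0)"

lemma dY_dP: "dY k (dP i f) = dP i (dY k f)" by (rule pderiv_commute)

lemma pderiv_pp[simp]: "pderiv_var v (pp i) = (if v = P i then 1 else 0)" by (simp add: pderiv_var_poly)
lemma pderiv_yy[simp]: "pderiv_var v (yy i) = (if v = Y i then 1 else 0)" by (simp add: pderiv_var_poly)

lemma yfree_dY[simp]: "yfree g \<Longrightarrow> dY k g = 0" by (simp add: yfree_def)
lemma yfree_zero[simp]: "yfree 0" by (simp add: yfree_def)
lemma yfree_add[intro]: "yfree f \<Longrightarrow> yfree g \<Longrightarrow> yfree (f + g)" by (simp add: yfree_def pderiv_add)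
lemma yfree_diff[intro]: "yfree f \<Longrightarrow> yfree g \<Longrightarrow> yfree (f - g)" by (simp add: yfree_def pderiv_diff)
lemma yfree_uminus[intro]: "yfree f \<Longrightarrow> yfree (- f)" by (simp add: yfree_def pderiv_uminus)
lemma yfree_mult[intro]: "yfree f \<Longrightarrow> yfree g \<Longrightarrow> yfree (f * g)" by (simp add: yfree_def pderiv_mult)
lemma yfree_sum[intro]: "(\<And>i. i \<in> A \<Longrightarrow> yfree (F i)) \<Longrightarrow> yfree (\<Sum>i\<in>A. F i)"
  by (simp add: yfree_def pderiv_sum)
lemma yfree_const[simp,intro]: "yfree (const c)" by (simp add: yfree_def)
lemma yfree_of_nat[simp,intro]: "yfree (of_nat n)" by (simp add: yfree_def)
lemma yfree_one[simp,intro]: "yfree 1" by (simp add: yfree_def)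
lemma yfree_pp[simp,intro]: "yfree (pp i)" by (simp add: yfree_def)
lemma yfree_dP[intro]: "yfree f \<Longrightarrow> yfree (dP i f)" by (simp add: yfree_def dY_dP)
lemma yfree_single: "(\<And>k. Poly_Mapping.lookup m (Y k) = 0) \<Longrightarrow> yfree (Poly_Mapping.single m c)"
  by (simp add: yfree_def pderiv_single)

lemma dP_yy_mult: "dP i (yy k * g) = yy k * dP i g" by (simp add: pderiv_mult)
lemma dY_yy_mult: "yfree g \<Longrightarrow> dY j (yy k * g) = (if j = k then g else 0)" by (simp add: pderiv_mult)

lemma mult_if_zero: "x * (if b then y else 0) = (if b then x * y else (0::'a::mult_zero))" by simp

lemma lin_comp: "lin A \<Longrightarrow> lin B \<Longrightarrow> lin (\<lambda>f. A (B f))" by (simp add: lin_def)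
lemma lin_plus: "lin A \<Longrightarrow> lin B \<Longrightarrow> lin (\<lambda>f. A f + B f)" by (simp add: lin_def distrib_left add_ac)
lemma lin_minus: "lin A \<Longrightarrow> lin B \<Longrightarrow> lin (\<lambda>f. A f - B f)" by (simp add: lin_def right_diff_distrib)

lemma PY_monomial:
  assumes "f \<in> PY" "m \<in> Poly_Mapping.keys f"
  shows "(\<forall>k. Poly_Mapping.lookup m (Y k) = 0) \<or>
         (\<exists>k. Poly_Mapping.lookup m (Y k) = 1 \<and> (\<forall>j. j \<noteq> k \<longrightarrow> Poly_Mapping.lookup m (Y j) = 0))"
proof -
  let ?S = "Poly_Mapping.keys m \<inter> range Y"
  have S1: "(\<Sum>v\<in>?S. Poly_Mapping.lookup m v) \<le> 1" using assms unfolding PY_def by auto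
  have fin: "finite ?S" by simp
  show ?thesis
  proof (cases "\<forall>k. Poly_Mapping.lookup m (Y k) = 0")
    case True then show ?thesis by simp
  next
    case False
    then obtain k where k: "Poly_Mapping.lookup m (Y k) \<noteq> 0" by auto
    then have kS: "Y k \<in> ?S" by (simp add: in_keys_iff)
    have "Poly_Mapping.lookup m (Y k) \<le> (\<Sum>v\<in>?S. Poly_Mapping.lookup m v)"
      by (rule member_le_sum[OF kS]) (auto simp: fin)
    then have k1: "Poly_Mapping.lookup m (Y k) = 1" using S1 k by linarith
    have "Poly_Mapping.lookup m (Y j) = 0" if "j \<noteq> k" for j
    proof (rule ccontr)
      assume j: "Poly_Mapping.lookup m (Y j) \<noteq> 0"
      then have "{Y k, Y j} \<subseteq> ?S" using kS by (simp add: in_keys_iff)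
      then have "(\<Sum>v\<in>{Y k, Y j}. Poly_Mapping.lookup m v) \<le> (\<Sum>v\<in>?S. Poly_Mapping.lookup m v)"
        by (intro sum_mono2 fin) auto
      then show False using that S1 k j by simp
    qed
    then show ?thesis using k1 by blast
  qed
qed

lemma single_split_Y:
  assumes "Poly_Mapping.lookup m (Y k) = 1" "\<forall>j. j \<noteq> k \<longrightarrow> Poly_Mapping.lookup m (Y j) = 0"
  shows "Poly_Mapping.single m c = yy k * Poly_Mapping.single (m - dl (Y k)) c \<and>
         yfree (Poly_Mapping.single (m - dl (Y k)) c)"
proof
  have "dl (Y k) + (m - dl (Y k)) = m"
    using dl_sub_add[of m "Y k"] assms(1) by (simp add: add.commute)
  then show "Poly_Mapping.single m c = yy k * Poly_Mapping.single (m - dl (Y k)) c"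
    by (simp add: var_poly_def mult_single)
  show "yfree (Poly_Mapping.single (m - dl (Y k)) c)"
    by (rule yfree_single) (use assms in \<open>auto simp: lookup_minus lookup_single when_def\<close>)
qed

lemma PY_reduce:
  assumes "f \<in> PY" "lin T"
    and "\<And>g. yfree g \<Longrightarrow> T g = 0"
    and "\<And>g k. yfree g \<Longrightarrow> T (yy k * g) = 0"
  shows "T f = 0"
proof -
  have "T f = (\<Sum>m\<in>Poly_Mapping.keys f. T (Poly_Mapping.single m (Poly_Mapping.lookup f m)))"
    by (subst poly_mapping_sum_singles) (simp add: lin_sum[OF assms(2)])
  also have "\<dots> = 0"
  proof (rule sum.neutral, rule ballI)
    fix m assume m: "m \<in> Poly_Mapping.keys f"
    from PY_monomial[OF assms(1) m] show "T (Poly_Mapping.single m (Poly_Mapping.lookup f m)) = 0"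
    proof
      assume "\<forall>k. Poly_Mapping.lookup m (Y k) = 0"
      then show ?thesis by (intro assms(3) yfree_single) auto
    next
      assume "\<exists>k. Poly_Mapping.lookup m (Y k) = 1 \<and> (\<forall>j. j \<noteq> k \<longrightarrow> Poly_Mapping.lookup m (Y j) = 0)"
      then obtain k where "Poly_Mapping.lookup m (Y k) = 1" "\<forall>j. j \<noteq> k \<longrightarrow> Poly_Mapping.lookup m (Y j) = 0" by blast
      from single_split_Y[OF this, of "Poly_Mapping.lookup f m"] show ?thesis using assms(4) by simp
    qed
  qed
  finally show ?thesis .
qed

lemma bnd_le: "vb N f \<Longrightarrow> 1 \<le> N \<Longrightarrow> bnd f \<le> N" by (rule vb_bnd)
lemma vb_bndI: "bnd f \<le> N \<Longrightarrow> vb N f" using bnd_vb vb_mono by blast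
lemma bnd_yy_mult: "bnd g \<le> N \<Longrightarrow> k < N \<Longrightarrow> bnd (yy k * g) \<le> N"
proof -
  assume a: "bnd g \<le> N" "k < N"
  have "vb N (yy k * g)" using a by (intro vb_mult vb_var) (auto intro: vb_bndI)
  then show ?thesis using a by (intro vb_bnd) auto
qed

lemma La_yfree: "yfree g \<Longrightarrow> Lambda_Y g = 0"
  by (simp add: La_LaN LaN_def)
lemma D'_yfree: "yfree g \<Longrightarrow> D'_alpha g = 0"
  by (simp add: D'_D'N D'N_def dY_dP)
lemma Yp_yfree: "yfree g \<Longrightarrow> Y_plus g = 0"
  by (simp add: Yp_YpN YpN_def)
lemma Theta_yfree: "yfree g \<Longrightarrow> Theta_Y g = 0"
  by (simp add: Theta_ThN ThN_def)

lemma dY_DN: "dY k (DN N f) = DN N (dY k f)"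
  by (simp add: DN_def pderiv_sum pderiv_mult pderiv_add pderiv_const_mult dY_dP del: of_nat_mult of_nat_add)
lemma D_yfree: "yfree g \<Longrightarrow> yfree (D_alpha g)"
  by (simp add: yfree_def D_DN dY_DN lin_zero[OF lin_DN])

lemma Theta_yy: assumes "yfree g"
  shows "Theta_Y (yy k * g) = (if 1 \<le> k then pp k * g else 0)"
proof -
  let ?N = "k + bnd g"
  have "Theta_Y (yy k * g) = ThN ?N (yy k * g)"
    by (rule ThN_stable[symmetric], rule bnd_yy_mult) (use bnd_ge1[of g] in auto)
  also have "\<dots> = (if 1 \<le> k then pp k * g else 0)"
    using assms bnd_ge1[of g] by (simp add: ThN_def dY_yy_mult mult_if_zero sum.delta')
  finally show ?thesis .
qed

lemma Yp_yy: assumes "yfree g"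
  shows "Y_plus (yy k * g) = yy (k+1) * g"
proof -
  let ?N = "k + bnd g"
  have "Y_plus (yy k * g) = YpN ?N (yy k * g)"
    by (rule YpN_stable[symmetric], rule bnd_yy_mult) (use bnd_ge1[of g] in auto)
  also have "\<dots> = yy (k+1) * g"
    using assms bnd_ge1[of g] by (simp add: YpN_def dY_yy_mult mult_if_zero sum.delta')
  finally show ?thesis .
qed

lemma DN_yy: "DN N (yy k * g) = yy k * DN N g"
  unfolding DN_def by (simp only: dP_yy_mult) (simp add: sum_distrib_left distrib_left mult_ac del: of_nat_mult of_nat_add)

lemma D_yy: "D_alpha (yy k * g) = yy k * D_alpha g"
proof -
  let ?N = "k + bnd g"
  have "D_alpha (yy k * g) = DN ?N (yy k * g)"
    by (rule DN_stable[symmetric], rule bnd_yy_mult) (use bnd_ge1[of g] in auto)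
  also have "\<dots> = yy k * DN ?N g" by (rule DN_yy)
  also have "DN ?N g = D_alpha g" by (rule DN_stable) simp
  finally show ?thesis .
qed

lemma coef_char0: "(of_nat n :: coef) = 0 \<longleftrightarrow> n = 0" by simp

lemma sum_delta_gen:
  assumes "finite A" "\<And>j. j \<in> A \<Longrightarrow> Q j = (j = a)"
  shows "(\<Sum>j\<in>A. if Q j then F j else 0) = (if a \<in> A then F a else 0)"
proof -
  have "(\<Sum>j\<in>A. if Q j then F j else 0) = (\<Sum>j\<in>A. if j = a then F j else 0)"
    by (rule sum.cong) (use assms in auto)
  also have "\<dots> = (if a \<in> A then F a else 0)" using assms(1) by (simp add: sum.delta)
  finally show ?thesis .
qed

lemma sum_if_const: "(\<Sum>j\<in>A. if b then F j else 0) = (if b then (\<Sum>j\<in>A. F j) else 0)"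
  by simp

lemma sum_split3:
  fixes k N :: nat assumes "k \<le> N"
  shows "(\<Sum>m\<in>{0..N}. F m) = (\<Sum>m\<in>{0..<k}. F m) + F k + (\<Sum>m\<in>{Suc k..N}. F m)"
proof -
  have "{0..N} = {0..<k} \<union> ({k} \<union> {Suc k..N})" using assms by auto
  moreover have "sum F ({0..<k} \<union> {Suc k..N}) = sum F {0..<k} + sum F {Suc k..N}"
    by (rule sum.union_disjoint) auto
  ultimately show ?thesis by (simp add: add_ac)
qed

lemma sum_shift:
  fixes k N :: nat assumes "k \<le> N"
  shows "(\<Sum>m\<in>{Suc k..N}. F m) = (\<Sum>j\<in>{1..N-k}. F (j + k))"
proof -
  have "{Suc k..N} = {1+k..(N-k)+k}" using assms by auto
  then show ?thesis by (simp only: sum.shift_bounds_cl_nat_ivl)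
qed

lemma sum_shift_down:
  fixes k :: nat
  shows "(\<Sum>m\<in>{0..<k}. F m) = (\<Sum>i\<in>{1..k}. F (i - 1))"
proof -
  have "{1..k} = {0+1..<k+1}" by auto
  then have "(\<Sum>i\<in>{1..k}. F (i - 1)) = (\<Sum>i\<in>{0..<k}. F (i + 1 - 1))"
    by (simp only: sum.shift_bounds_nat_ivl)
  then show ?thesis by simp
qed

lemma sum_filter_less:
  fixes k N :: nat assumes "k \<le> Suc N"
  shows "(\<Sum>i\<in>{1..N}. if i < k then F i else 0) = (\<Sum>i\<in>{1..<k}. F i)"
proof -
  have "{i \<in> {1..N}. i < k} = {1..<k}" using assms by auto
  then show ?thesis by (simp add: sum.inter_filter[symmetric])
qed

lemma sum_zero_first:
  fixes k :: nat assumes "0 < k \<Longrightarrow> F 0 = 0"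
  shows "(\<Sum>i\<in>{0..<k}. F i) = (\<Sum>i\<in>{1..<k}. F i)"
proof (cases k)
  case 0 then show ?thesis by simp
next
  case (Suc k')
  have "{0..<k} = insert 0 {1..<k}" using Suc by auto
  moreover have "F 0 = 0" using assms Suc by simp
  ultimately show ?thesis by simp
qed

lemma dP_big: "bnd g \<le> i \<Longrightarrow> dP i g = 0" using vanish1[of g "P i"] by simp
lemma dY_big: "bnd g \<le> i \<Longrightarrow> dY i g = 0" using vanish1[of g "Y i"] by simp

abbreviation bt :: mpoly where "bt \<equiv> const bb"

definition D2N :: "nat \<Rightarrow> mpoly \<Rightarrow> mpoly" where
  "D2N N f = (1 + bt) * (\<Sum>i\<in>{1..N}. \<Sum>j\<in>{1..N}. of_nat (i*j) * pp (i+j) * dP i (dP j f))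
     + (\<Sum>i\<in>{1..N}. \<Sum>j\<in>{1..N}. of_nat (i+j) * pp i * pp j * dP (i+j) f)
     + bt * (\<Sum>i\<in>{1..N}. of_nat (i*(i-1)) * pp i * dP i f)"
definition D'2N :: "nat \<Rightarrow> mpoly \<Rightarrow> mpoly" where
  "D'2N N f = (1 + bt) * (\<Sum>i\<in>{1..N}. \<Sum>j\<in>{1..N}. of_nat (2*i*j) * yy (i+j) * dY i (dP j f))
     + (\<Sum>i\<in>{1..N}. \<Sum>j\<in>{1..N}. of_nat (2*i) * yy i * pp j * dY (i+j) f)
     + bt * (\<Sum>i\<in>{1..N}. of_nat (i*(i-1)) * yy i * dY i f)"

definition D2 :: "mpoly \<Rightarrow> mpoly" where "D2 f = D2N (bnd f) f"
definition D'2 :: "mpoly \<Rightarrow> mpoly" where "D'2 f = D'2N (bnd f) f"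

abbreviation hf :: mpoly where "hf \<equiv> const (1/2)"

lemma hf_cancel: "hf * x = hf * y \<Longrightarrow> x = y"
proof -
  assume "hf * x = hf * y"
  then have "const 2 * (hf * x) = const 2 * (hf * y)" by simp
  then show "x = y" by (simp add: mult.assoc[symmetric] const_mult[symmetric])
qed
lemma hf_two: "hf * (2 * x) = x"
proof -
  have c: "hf * const 2 = 1" by (simp add: const_mult[symmetric])
  have t: "const 2 = (2::mpoly)" by (simp add: const_def)
  from c t have "hf * 2 = 1" by simp
  then show ?thesis by (simp add: mult.assoc[symmetric])
qed

lemma const_1bb: "const (1 + bb) = 1 + bt" by (simp add: const_add)

lemma DN_D2N: "DN N f = hf * D2N N f"
  by (simp add: DN_def D2N_def const_1bb)
lemma D'N_D'2N: "D'N N f = hf * D'2N N f"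
  by (simp add: D'N_def D'2N_def const_1bb)
lemma D_D2: "D_alpha f = hf * D2 f"
  by (simp add: D_DN DN_D2N D2_def)
lemma D'_D'2: "D'_alpha f = hf * D'2 f"
  by (simp add: D'_D'N D'N_D'2N D'2_def)
lemma D2N_stable: "bnd f \<le> N \<Longrightarrow> D2N N f = D2 f"
  by (rule hf_cancel) (simp add: DN_D2N[symmetric] DN_stable D_D2)
lemma D'2N_stable: "bnd f \<le> N \<Longrightarrow> D'2N N f = D'2 f"
  by (rule hf_cancel) (simp add: D'N_D'2N[symmetric] D'N_stable D'_D'2)
lemma lin_hf: "lin A \<Longrightarrow> A (hf * x) = hf * A x" by (rule lin_cmult)
lemma lin_D2: "lin D2"
  unfolding lin_def
proof (intro conjI allI)
  fix f g show "D2 (f + g) = D2 f + D2 g"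
    by (rule hf_cancel) (simp add: D_D2[symmetric] lin_add[OF lin_D] distrib_left)
next
  fix c f show "D2 (const c * f) = const c * D2 f"
    by (rule hf_cancel) (simp add: D_D2[symmetric] lin_cmult[OF lin_D] mult.left_commute)
qed
lemma lin_D'2: "lin D'2"
  unfolding lin_def
proof (intro conjI allI)
  fix f g show "D'2 (f + g) = D'2 f + D'2 g"
    by (rule hf_cancel) (simp add: D'_D'2[symmetric] lin_add[OF lin_D'] distrib_left)
next
  fix c f show "D'2 (const c * f) = const c * D'2 f"
    by (rule hf_cancel) (simp add: D'_D'2[symmetric] lin_cmult[OF lin_D'] mult.left_commute)
qed

lemma D'2_yy:
  assumes g: "yfree g" and N: "k + bnd g \<le> N"
  shows "D'2 (yy k * g) =
     (1 + bt) * (\<Sum>j\<in>{1..N}. of_nat (2*k*j) * yy (k+j) * dP j g)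
   + (\<Sum>i\<in>{1..<k}. of_nat (2*i) * yy i * pp (k-i) * g)
   + bt * (of_nat (k*(k-1)) * yy k * g)"
proof -
  have b1: "1 \<le> bnd g" by (rule bnd_ge1)
  have "D'2 (yy k * g) = D'2N N (yy k * g)"
    by (rule D'2N_stable[symmetric], rule bnd_yy_mult) (use N b1 in auto)
  also have "\<dots> =
       (1 + bt) * (\<Sum>i\<in>{1..N}. \<Sum>j\<in>{1..N}.
           of_nat (2*i*j) * yy (i+j) * (if i = k then dP j g else 0))
     + (\<Sum>i\<in>{1..N}. \<Sum>j\<in>{1..N}. of_nat (2*i) * yy i * pp j * (if i + j = k then g else 0))
     + bt * (\<Sum>i\<in>{1..N}. of_nat (i*(i-1)) * yy i * (if i = k then g else 0))"
    unfolding D'2N_def by (simp only: dP_yy_mult dY_yy_mult g yfree_dP)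
  also have "(\<Sum>i\<in>{1..N}. \<Sum>j\<in>{1..N}. of_nat (2*i*j) * yy (i+j) * (if i = k then dP j g else 0))
     = (\<Sum>j\<in>{1..N}. of_nat (2*k*j) * yy (k+j) * dP j g)"
  proof (cases "k = 0")
    case True then show ?thesis by simp
  next
    case False
    then show ?thesis using N b1
      by (simp add: mult_if_zero sum_if_const sum.delta')
  qed
  also have "(\<Sum>i\<in>{1..N}. \<Sum>j\<in>{1..N}. of_nat (2*i) * yy i * pp j * (if i + j = k then g else 0))
     = (\<Sum>i\<in>{1..N}. if i < k then of_nat (2*i) * yy i * pp (k-i) * g else 0)"
  proof (rule sum.cong[OF refl])
    fix i assume i: "i \<in> {1..N}"
    have "(\<Sum>j\<in>{1..N}. of_nat (2*i) * yy i * pp j * (if i + j = k then g else 0))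
       = (\<Sum>j\<in>{1..N}. if i + j = k then of_nat (2*i) * yy i * pp j * g else 0)"
      by (simp only: mult_if_zero)
    also have "\<dots> = (if k - i \<in> {1..N} \<and> i < k then of_nat (2*i) * yy i * pp (k-i) * g else 0)"
    proof (cases "i < k")
      case True
      show ?thesis by (subst sum_delta_gen[where a="k-i"]) (use True in auto)
    next
      case False
      then show ?thesis by (intro trans[OF sum.neutral]) auto
    qed
    also have "\<dots> = (if i < k then of_nat (2*i) * yy i * pp (k-i) * g else 0)"
      using N i by auto
    finally show "(\<Sum>j\<in>{1..N}. of_nat (2*i) * yy i * pp j * (if i + j = k then g else 0)) =
      (if i < k then of_nat (2*i) * yy i * pp (k-i) * g else 0)" .
  qed
  also have "\<dots> = (\<Sum>i\<in>{1..<k}. of_nat (2*i) * yy i * pp (k-i) * g)"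
    by (rule sum_filter_less) (use N in auto)
  also have "(\<Sum>i\<in>{1..N}. of_nat (i*(i-1)) * yy i * (if i = k then g else 0))
      = of_nat (k*(k-1)) * yy k * g"
    using N b1 by (cases "k = 0") (simp_all add: mult_if_zero sum.delta')
  finally show ?thesis .
qed

definition E2 :: "mpoly \<Rightarrow> mpoly" where "E2 f = D2 f + D'2 f"

definition La_e :: "nat \<Rightarrow> nat \<Rightarrow> mpoly \<Rightarrow> mpoly" where
  "La_e m k g = (if k < m then (1 + bt) * of_nat (m-k) * dP (m-k) g
                 else if m < k then pp (k-m) * g else bt * of_nat k * g)"
definition E_e :: "nat \<Rightarrow> nat \<Rightarrow> mpoly \<Rightarrow> mpoly" where
  "E_e m k g = (if k < m then (1 + bt) * of_nat (2*k*(m-k)) * dP (m-k) g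
                else if m < k then of_nat (2*m) * pp (k-m) * g
                else D2 g + bt * of_nat (k*(k-1)) * g)"

lemma D2_yy: "D2 (yy k * g) = yy k * D2 g"
  by (rule hf_cancel) (simp add: D_D2[symmetric] D_yy mult.left_commute)

lemma lin_E2: "lin E2"
  using lin_plus[OF lin_D2 lin_D'2] unfolding E2_def[abs_def] .

lemma E_col:
  assumes g: "yfree g" and N: "k + bnd g \<le> N"
  shows "E2 (yy k * g) = (\<Sum>m\<in>{0..N}. yy m * E_e m k g)"
proof -
  have b1: "1 \<le> bnd g" by (rule bnd_ge1)
  have kN: "k \<le> N" using N by simp
  have s1: "(\<Sum>m\<in>{0..<k}. yy m * E_e m k g) = (\<Sum>i\<in>{1..<k}. of_nat (2*i) * yy i * pp (k-i) * g)"
    by (subst sum_zero_first) (auto simp: E_e_def mult_ac intro!: sum.cong)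
  have s2: "yy k * E_e k k g = yy k * D2 g + bt * (of_nat (k*(k-1)) * yy k * g)"
    by (simp add: E_e_def distrib_left mult_ac)
  have "(\<Sum>m\<in>{Suc k..N}. yy m * E_e m k g) = (\<Sum>j\<in>{1..N-k}. yy (j+k) * E_e (j+k) k g)"
    by (rule sum_shift[OF kN])
  also have "\<dots> = (\<Sum>j\<in>{1..N-k}. (1 + bt) * (of_nat (2*k*j) * yy (k+j) * dP j g))"
    by (rule sum.cong) (auto simp: E_e_def algebra_simps)
  also have "\<dots> = (\<Sum>j\<in>{1..N}. (1 + bt) * (of_nat (2*k*j) * yy (k+j) * dP j g))"
    by (rule sum_stable[symmetric]) (use N in \<open>auto simp: dP_big\<close>)
  finally have s3: "(\<Sum>m\<in>{Suc k..N}. yy m * E_e m k g) = (1 + bt) * (\<Sum>j\<in>{1..N}. of_nat (2*k*j) * yy (k+j) * dP j g)"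
    by (simp add: sum_distrib_left)
  show ?thesis
    unfolding E2_def D2_yy D'2_yy[OF g N] sum_split3[OF kN] s1 s2 s3 by (simp add: add_ac)
qed

lemma dP_if: "pderiv_var v (if b then x else 0) = (if b then pderiv_var v x else 0)" by simp

lemma La_yy:
  assumes g: "yfree g" and N: "k + bnd g \<le> N"
  shows "Lambda_Y (yy k * g) = (1 + bt) * (\<Sum>i\<in>{1..N}. of_nat i * yy (i+k) * dP i g)
     + (\<Sum>m\<in>{0..<k}. yy m * pp (k-m) * g) + bt * (of_nat k * yy k * g)"
proof -
  have b1: "1 \<le> bnd g" by (rule bnd_ge1)
  have "Lambda_Y (yy k * g) = LaN N (yy k * g)"
    by (rule LaN_stable[symmetric], rule bnd_yy_mult) (use N b1 in auto)
  also have "\<dots> = (1 + bt) * (\<Sum>i\<in>{1..N}. \<Sum>j\<in>{1..N}.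
         of_nat i * yy (i+j-1) * (if j - 1 = k then dP i g else 0))
   + (\<Sum>i\<in>{1..N}. \<Sum>j\<in>{1..N}. yy (i-1) * pp j * (if i + j - 1 = k then g else 0))
   + bt * (\<Sum>i\<in>{0..N}. of_nat i * yy i * (if i = k then g else 0))"
    unfolding LaN_def const_1bb by (simp only: dY_yy_mult g dP_if)
  also have "(\<Sum>i\<in>{1..N}. \<Sum>j\<in>{1..N}. of_nat i * yy (i+j-1) * (if j - 1 = k then dP i g else 0))
      = (\<Sum>i\<in>{1..N}. of_nat i * yy (i+k) * dP i g)"
  proof (rule sum.cong[OF refl])
    fix i assume i: "i \<in> {1..N}"
    have "(\<Sum>j\<in>{1..N}. of_nat i * yy (i+j-1) * (if j - 1 = k then dP i g else 0))
       = (\<Sum>j\<in>{1..N}. if j - 1 = k then of_nat i * yy (i+j-1) * dP i g else 0)"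
      by (simp only: mult_if_zero)
    also have "\<dots> = of_nat i * yy (i+(k+1)-1) * dP i g"
      by (subst sum_delta_gen[where a="k+1"]) (use N b1 in auto)
    finally show "(\<Sum>j\<in>{1..N}. of_nat i * yy (i+j-1) * (if j - 1 = k then dP i g else 0))
       = of_nat i * yy (i+k) * dP i g" by simp
  qed
  also have "(\<Sum>i\<in>{1..N}. \<Sum>j\<in>{1..N}. yy (i-1) * pp j * (if i + j - 1 = k then g else 0))
      = (\<Sum>i\<in>{1..N}. if i < k + 1 then yy (i-1) * pp (k+1-i) * g else 0)"
  proof (rule sum.cong[OF refl])
    fix i assume i: "i \<in> {1..N}"
    have "(\<Sum>j\<in>{1..N}. yy (i-1) * pp j * (if i + j - 1 = k then g else 0))
       = (\<Sum>j\<in>{1..N}. if i + j - 1 = k then yy (i-1) * pp j * g else 0)"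
      by (simp only: mult_if_zero)
    also have "\<dots> = (if i < k + 1 then yy (i-1) * pp (k+1-i) * g else 0)"
    proof (cases "i < k + 1")
      case True
      show ?thesis by (subst sum_delta_gen[where a="k+1-i"]) (use True i N in auto)
    next
      case False
      then show ?thesis using i by (intro trans[OF sum.neutral]) auto
    qed
    finally show "(\<Sum>j\<in>{1..N}. yy (i-1) * pp j * (if i + j - 1 = k then g else 0))
       = (if i < k + 1 then yy (i-1) * pp (k+1-i) * g else 0)" .
  qed
  also have "\<dots> = (\<Sum>i\<in>{1..<k+1}. yy (i-1) * pp (k+1-i) * g)"
    by (rule sum_filter_less) (use N in auto)
  also have "\<dots> = (\<Sum>i\<in>{1..k}. yy (i-1) * pp (k-(i-1)) * g)"
    by (rule sum.cong) auto
  also have "\<dots> = (\<Sum>m\<in>{0..<k}. yy m * pp (k-m) * g)"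
    by (rule sum_shift_down[symmetric])
  also have "(\<Sum>i\<in>{0..N}. of_nat i * yy i * (if i = k then g else 0)) = of_nat k * yy k * g"
    using N by (simp add: mult_if_zero sum.delta')
  finally show ?thesis .
qed

lemma La_col:
  assumes g: "yfree g" and N: "k + bnd g \<le> N"
  shows "Lambda_Y (yy k * g) = (\<Sum>m\<in>{0..N}. yy m * La_e m k g)"
proof -
  have kN: "k \<le> N" using N by simp
  have s1: "(\<Sum>m\<in>{0..<k}. yy m * La_e m k g) = (\<Sum>m\<in>{0..<k}. yy m * pp (k-m) * g)"
    by (auto simp: La_e_def mult_ac intro!: sum.cong)
  have s2: "yy k * La_e k k g = bt * (of_nat k * yy k * g)"
    by (simp add: La_e_def mult_ac)
  have "(\<Sum>m\<in>{Suc k..N}. yy m * La_e m k g) = (\<Sum>j\<in>{1..N-k}. yy (j+k) * La_e (j+k) k g)"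
    by (rule sum_shift[OF kN])
  also have "\<dots> = (\<Sum>j\<in>{1..N-k}. (1 + bt) * (of_nat j * yy (j+k) * dP j g))"
    by (rule sum.cong) (auto simp: La_e_def mult_ac)
  also have "\<dots> = (\<Sum>j\<in>{1..N}. (1 + bt) * (of_nat j * yy (j+k) * dP j g))"
    by (rule sum_stable[symmetric]) (use N in \<open>auto simp: dP_big\<close>)
  finally have s3: "(\<Sum>m\<in>{Suc k..N}. yy m * La_e m k g) = (1 + bt) * (\<Sum>j\<in>{1..N}. of_nat j * yy (j+k) * dP j g)"
    by (simp add: sum_distrib_left)
  show ?thesis
    unfolding La_yy[OF g N] sum_split3[OF kN] s1 s2 s3 by (simp add: add_ac)
qed

lemma dsum_delta_j:
  "(\<Sum>i\<in>A. \<Sum>j\<in>{1..N::nat}. if j = d then F i j else 0) = (if d \<in> {1..N} then (\<Sum>i\<in>A. F i d) else 0)"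
  by (simp add: sum.delta' sum_if_const)
lemma dsum_delta_i:
  "(\<Sum>i\<in>{1..N::nat}. \<Sum>j\<in>B. if i = d then F i j else 0) = (if d \<in> {1..N} then (\<Sum>j\<in>B. F d j) else 0)"
  by (simp add: sum.delta' sum_if_const)

lemma dsum_diag:
  fixes d N :: nat assumes "d \<le> Suc N"
  shows "(\<Sum>i\<in>{1..N}. \<Sum>j\<in>{1..N}. if i + j = d then F i j else 0) = (\<Sum>i\<in>{1..<d}. F i (d - i))"
proof -
  have "(\<Sum>i\<in>{1..N}. \<Sum>j\<in>{1..N}. if i + j = d then F i j else 0)
     = (\<Sum>i\<in>{1..N}. if i < d then F i (d - i) else 0)"
  proof (rule sum.cong[OF refl])
    fix i assume i: "i \<in> {1..N}"
    show "(\<Sum>j\<in>{1..N}. if i + j = d then F i j else 0) = (if i < d then F i (d - i) else 0)"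
    proof (cases "i < d")
      case True
      show ?thesis by (subst sum_delta_gen[where a="d-i"]) (use True i assms in auto)
    next
      case False
      then show ?thesis using i by (intro trans[OF sum.neutral]) auto
    qed
  qed
  also have "\<dots> = (\<Sum>i\<in>{1..<d}. F i (d - i))" by (rule sum_filter_less[OF assms])
  finally show ?thesis .
qed

lemma ring_id_C:
  fixes b A p T1 c B T2 e h T3 :: "'a::comm_ring_1"
  shows "(1+b)*(2*A + p*T1) + (c*B + p*T2) + b*(e*p*h + p*T3) = p*((1+b)*T1 + T2 + b*T3) + (2*(1+b)*A + c*B + b*(e*p*h))"
  by (simp add: algebra_simps)

definition C2N :: "nat \<Rightarrow> nat \<Rightarrow> mpoly \<Rightarrow> mpoly" where
  "C2N N d h = 2 * (1 + bt) * (\<Sum>i\<in>{1..N}. of_nat (i*d) * pp (i+d) * dP i h)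
     + of_nat d * (\<Sum>i\<in>{1..<d}. pp i * pp (d-i) * h) + bt * (of_nat (d*(d-1)) * pp d * h)"

lemma D2N_pp:
  assumes d: "1 \<le> d" "d \<le> N"
  shows "D2N N (pp d * h) = pp d * D2N N h + C2N N d h"
proof -
  have e2: "\<And>k. dP k (pp d * h) = (if k = d then h else 0) + pp d * dP k h"
    by (simp add: pderiv_mult)
  have e1: "\<And>i j. dP i (dP j (pp d * h)) =
      (if j = d then dP i h else 0) + (if i = d then dP j h else 0) + pp d * dP i (dP j h)"
    by (simp add: pderiv_mult pderiv_add)
  have t1: "(\<Sum>i\<in>{1..N}. \<Sum>j\<in>{1..N}. of_nat (i*j) * pp (i+j) * dP i (dP j (pp d * h)))
     = 2 * (\<Sum>i\<in>{1..N}. of_nat (i*d) * pp (i+d) * dP i h)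
       + pp d * (\<Sum>i\<in>{1..N}. \<Sum>j\<in>{1..N}. of_nat (i*j) * pp (i+j) * dP i (dP j h))"
  proof -
    have "(\<Sum>i\<in>{1..N}. \<Sum>j\<in>{1..N}. of_nat (i*j) * pp (i+j) * dP i (dP j (pp d * h)))
      = (\<Sum>i\<in>{1..N}. \<Sum>j\<in>{1..N}. if j = d then of_nat (i*j) * pp (i+j) * dP i h else 0)
      + (\<Sum>i\<in>{1..N}. \<Sum>j\<in>{1..N}. if i = d then of_nat (i*j) * pp (i+j) * dP j h else 0)
      + (\<Sum>i\<in>{1..N}. \<Sum>j\<in>{1..N}. pp d * (of_nat (i*j) * pp (i+j) * dP i (dP j h)))"
      by (simp only: e1 distrib_left mult_if_zero sum.distrib mult.left_commute[of "pp d"])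
    also have "\<dots> = (\<Sum>i\<in>{1..N}. of_nat (i*d) * pp (i+d) * dP i h)
      + (\<Sum>j\<in>{1..N}. of_nat (d*j) * pp (d+j) * dP j h)
      + pp d * (\<Sum>i\<in>{1..N}. \<Sum>j\<in>{1..N}. of_nat (i*j) * pp (i+j) * dP i (dP j h))"
      using d by (simp only: dsum_delta_j dsum_delta_i sum_distrib_left) simp
    also have "(\<Sum>j\<in>{1..N}. of_nat (d*j) * pp (d+j) * dP j h) = (\<Sum>i\<in>{1..N}. of_nat (i*d) * pp (i+d) * dP i h)"
      by (simp only: mult.commute[of d] add.commute[of d])
    finally show ?thesis by (simp only: mult_2)
  qed
  have t2: "(\<Sum>i\<in>{1..N}. \<Sum>j\<in>{1..N}. of_nat (i+j) * pp i * pp j * dP (i+j) (pp d * h))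
     = of_nat d * (\<Sum>i\<in>{1..<d}. pp i * pp (d-i) * h)
       + pp d * (\<Sum>i\<in>{1..N}. \<Sum>j\<in>{1..N}. of_nat (i+j) * pp i * pp j * dP (i+j) h)"
  proof -
    have "(\<Sum>i\<in>{1..N}. \<Sum>j\<in>{1..N}. of_nat (i+j) * pp i * pp j * dP (i+j) (pp d * h))
      = (\<Sum>i\<in>{1..N}. \<Sum>j\<in>{1..N}. if i + j = d then of_nat d * (pp i * pp j * h) else 0)
      + (\<Sum>i\<in>{1..N}. \<Sum>j\<in>{1..N}. pp d * (of_nat (i+j) * pp i * pp j * dP (i+j) h))"
      by (simp only: e2 distrib_left mult_if_zero sum.distrib mult.left_commute[of "pp d"])
         (auto intro!: sum.cong simp: mult_ac)
    also have "\<dots> = of_nat d * (\<Sum>i\<in>{1..<d}. pp i * pp (d-i) * h)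
       + pp d * (\<Sum>i\<in>{1..N}. \<Sum>j\<in>{1..N}. of_nat (i+j) * pp i * pp j * dP (i+j) h)"
      using d by (subst dsum_diag) (simp_all add: sum_distrib_left mult_ac)
    finally show ?thesis .
  qed
  have t3: "(\<Sum>i\<in>{1..N}. of_nat (i*(i-1)) * pp i * dP i (pp d * h))
     = of_nat (d*(d-1)) * pp d * h + pp d * (\<Sum>i\<in>{1..N}. of_nat (i*(i-1)) * pp i * dP i h)"
    using d by (simp only: e2 distrib_left mult_if_zero sum.distrib)
      (simp add: sum.delta' sum_distrib_left mult_ac del: of_nat_mult)
  show ?thesis
    unfolding D2N_def C2N_def t1 t2 t3 by (rule ring_id_C)
qed

lemma dsum_diag':
  fixes d N :: nat assumes "d \<le> Suc N"
  shows "(\<Sum>i\<in>{1..N}. \<Sum>j\<in>{1..N}. if d = i + j then F i j else 0) = (\<Sum>i\<in>{1..<d}. F i (d - i))"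
  using dsum_diag[OF assms, of F] by (simp add: eq_commute[of d])

lemma dsum_delta_j':
  "(\<Sum>i\<in>A. \<Sum>j\<in>{1..N::nat}. if d = j then F i j else 0) = (if d \<in> {1..N} then (\<Sum>i\<in>A. F i d) else 0)"
  by (simp add: sum.delta sum_if_const)
lemma dsum_delta_i':
  "(\<Sum>i\<in>{1..N::nat}. \<Sum>j\<in>B. if d = i then F i j else 0) = (if d \<in> {1..N} then (\<Sum>j\<in>B. F d j) else 0)"
  by (simp add: sum.delta sum_if_const)

definition K2N :: "nat \<Rightarrow> nat \<Rightarrow> mpoly \<Rightarrow> mpoly" where
  "K2N N d h = (1 + bt) * (\<Sum>i\<in>{1..<d}. of_nat (i*(d-i)) * dP i (dP (d-i) h))
     + 2 * (\<Sum>j\<in>{1..N}. of_nat (d+j) * pp j * dP (d+j) h) + bt * (of_nat (d*(d-1)) * dP d h)"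

lemma ring_id_K:
  fixes b S1 T1 S2 T2 e x T3 :: "'a::comm_ring_1"
  shows "(1+b)*(S1 + T1) + (2*S2 + T2) + b*(e*x + T3) = ((1+b)*T1 + T2 + b*T3) + ((1+b)*S1 + 2*S2 + b*(e*x))"
  by (simp add: algebra_simps)

lemma dP_D2N:
  assumes d: "1 \<le> d" "d \<le> N"
  shows "dP d (D2N N h) = D2N N (dP d h) + K2N N d h"
proof -
  have c1: "\<And>i. dP d (dP i h) = dP i (dP d h)"
    by (rule pderiv_commute)
  have c2: "\<And>i j. dP d (dP i (dP j h)) = dP i (dP j (dP d h))"
    by (simp only: pderiv_commute[of "P d" "P i" for i] c1)
  have t1: "dP d (\<Sum>i\<in>{1..N}. \<Sum>j\<in>{1..N}. of_nat (i*j) * pp (i+j) * dP i (dP j h))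
     = (\<Sum>i\<in>{1..<d}. of_nat (i*(d-i)) * dP i (dP (d-i) h))
       + (\<Sum>i\<in>{1..N}. \<Sum>j\<in>{1..N}. of_nat (i*j) * pp (i+j) * dP i (dP j (dP d h)))"
  proof -
    have "dP d (\<Sum>i\<in>{1..N}. \<Sum>j\<in>{1..N}. of_nat (i*j) * pp (i+j) * dP i (dP j h))
      = (\<Sum>i\<in>{1..N}. \<Sum>j\<in>{1..N}. if d = i + j then of_nat (i*j) * dP i (dP j h) else 0)
      + (\<Sum>i\<in>{1..N}. \<Sum>j\<in>{1..N}. of_nat (i*j) * pp (i+j) * dP i (dP j (dP d h)))"
      by (simp only: pderiv_sum pderiv_mult pderiv_of_nat pderiv_pp c2 sum.distrib[symmetric])
         (rule sum.cong[OF refl], rule sum.cong[OF refl], simp)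
    also have "\<dots> = (\<Sum>i\<in>{1..<d}. of_nat (i*(d-i)) * dP i (dP (d-i) h))
       + (\<Sum>i\<in>{1..N}. \<Sum>j\<in>{1..N}. of_nat (i*j) * pp (i+j) * dP i (dP j (dP d h)))"
      using d by (subst dsum_diag') simp_all
    finally show ?thesis .
  qed
  have t2: "dP d (\<Sum>i\<in>{1..N}. \<Sum>j\<in>{1..N}. of_nat (i+j) * pp i * pp j * dP (i+j) h)
     = 2 * (\<Sum>j\<in>{1..N}. of_nat (d+j) * pp j * dP (d+j) h)
       + (\<Sum>i\<in>{1..N}. \<Sum>j\<in>{1..N}. of_nat (i+j) * pp i * pp j * dP (i+j) (dP d h))"
  proof -
    have "dP d (\<Sum>i\<in>{1..N}. \<Sum>j\<in>{1..N}. of_nat (i+j) * pp i * pp j * dP (i+j) h)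
      = (\<Sum>i\<in>{1..N}. \<Sum>j\<in>{1..N}. if d = i then of_nat (i+j) * pp j * dP (i+j) h else 0)
      + (\<Sum>i\<in>{1..N}. \<Sum>j\<in>{1..N}. if d = j then of_nat (i+j) * pp i * dP (i+j) h else 0)
      + (\<Sum>i\<in>{1..N}. \<Sum>j\<in>{1..N}. of_nat (i+j) * pp i * pp j * dP (i+j) (dP d h))"
      by (simp only: pderiv_sum pderiv_mult pderiv_of_nat pderiv_pp c1 sum.distrib[symmetric])
         (rule sum.cong[OF refl], rule sum.cong[OF refl], simp)
    also have "\<dots> = (\<Sum>j\<in>{1..N}. of_nat (d+j) * pp j * dP (d+j) h)
       + (\<Sum>i\<in>{1..N}. of_nat (i+d) * pp i * dP (i+d) h)
       + (\<Sum>i\<in>{1..N}. \<Sum>j\<in>{1..N}. of_nat (i+j) * pp i * pp j * dP (i+j) (dP d h))"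
      using d by (simp only: dsum_delta_j' dsum_delta_i') simp
    also have "(\<Sum>i\<in>{1..N}. of_nat (i+d) * pp i * dP (i+d) h) = (\<Sum>j\<in>{1..N}. of_nat (d+j) * pp j * dP (d+j) h)"
      by (simp only: add.commute[of _ d])
    finally show ?thesis by (simp only: mult_2)
  qed
  have t3: "dP d (\<Sum>i\<in>{1..N}. of_nat (i*(i-1)) * pp i * dP i h)
     = of_nat (d*(d-1)) * dP d h + (\<Sum>i\<in>{1..N}. of_nat (i*(i-1)) * pp i * dP i (dP d h))"
  proof -
    have "dP d (\<Sum>i\<in>{1..N}. of_nat (i*(i-1)) * pp i * dP i h)
      = (\<Sum>i\<in>{1..N}. if d = i then of_nat (i*(i-1)) * dP i h else 0)
        + (\<Sum>i\<in>{1..N}. of_nat (i*(i-1)) * pp i * dP i (dP d h))"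
      by (simp only: pderiv_sum pderiv_mult pderiv_of_nat pderiv_pp c1 sum.distrib[symmetric])
         (rule sum.cong[OF refl], simp)
    then show ?thesis using d by (simp add: sum.delta)
  qed
  show ?thesis
    unfolding D2N_def K2N_def
    by (simp only: pderiv_add pderiv_mult pderiv_const_mult pderiv_one pderiv_const t1 t2 t3
        mult_zero_left add_0_left add_0_right) (rule ring_id_K)
qed

lemma D2_pp: assumes "1 \<le> d" "d + bnd h \<le> N"
  shows "D2 (pp d * h) = pp d * D2 h + C2N N d h"
proof -
  have "vb N (pp d * h)" using assms bnd_ge1[of h] by (intro vb_mult vb_var) (auto intro: vb_bndI)
  then have b: "bnd (pp d * h) \<le> N" using assms by (intro vb_bnd) auto
  have "D2 (pp d * h) = D2N N (pp d * h)" using D2N_stable[OF b] by simp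
  also have "\<dots> = pp d * D2N N h + C2N N d h" by (rule D2N_pp) (use assms bnd_ge1[of h] in auto)
  also have "D2N N h = D2 h" by (rule D2N_stable) (use assms in auto)
  finally show ?thesis .
qed

lemma dP_D2: assumes "1 \<le> d" "d + bnd h \<le> N"
  shows "dP d (D2 h) = D2 (dP d h) + K2N N d h"
proof -
  have b1: "bnd h \<le> N" using assms by simp
  have "vb N (dP d h)" using b1 by (intro vb_pderiv vb_bndI)
  then have b: "bnd h \<le> N" "bnd (dP d h) \<le> N" using b1 assms by (auto intro: vb_bnd)
  have "dP d (D2 h) = dP d (D2N N h)" using D2N_stable[OF b(1)] by simp
  also have "\<dots> = D2N N (dP d h) + K2N N d h" by (rule dP_D2N) (use assms bnd_ge1[of h] in auto)
  also have "D2N N (dP d h) = D2 (dP d h)" by (rule D2N_stable[OF b(2)])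
  finally show ?thesis .
qed

lemma one_bt: "1 + bt = const (1 + bb)" by (simp add: const_1bb)
lemma D2_1bt: "D2 ((1 + bt) * x) = (1 + bt) * D2 x" by (simp add: one_bt lin_cmult[OF lin_D2])
lemma D2_bt: "D2 (bt * x) = bt * D2 x" by (simp add: lin_cmult[OF lin_D2])
lemma D2_of_nat: "D2 (of_nat n * x) = of_nat n * D2 x" by (simp add: of_nat_const lin_cmult[OF lin_D2])
lemma D2_zero[simp]: "D2 0 = 0" by (rule lin_zero[OF lin_D2])
lemma dP_1bt: "dP i ((1 + bt) * x) = (1 + bt) * dP i x" by (simp add: one_bt pderiv_const_mult)
lemma dP_bt: "dP i (bt * x) = bt * dP i x" by (simp add: pderiv_const_mult)
lemma dP_of_nat: "dP i (of_nat n * x) = of_nat n * dP i x" by (simp add: pderiv_mult)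
lemma dP_pp_mult: "dP i (pp j * x) = (if i = j then x else 0) + pp j * dP i x" by (simp add: pderiv_mult)
lemma dP_pp_mult_ne: "i \<noteq> j \<Longrightarrow> dP i (pp j * x) = pp j * dP i x" by (simp add: pderiv_mult)

lemma La_e_zero[simp]: "La_e m n 0 = 0" by (simp add: La_e_def)
lemma E_e_zero[simp]: "E_e m n 0 = 0" by (simp add: E_e_def)
lemma La_e_big: "k + bnd g \<le> n \<Longrightarrow> La_e n k g = 0"
  using bnd_ge1[of g] by (auto simp: La_e_def dP_big)
lemma E_e_big: "k + bnd g \<le> n \<Longrightarrow> E_e n k g = 0"
  using bnd_ge1[of g] by (auto simp: E_e_def dP_big)

lemma yfree_D2: "yfree g \<Longrightarrow> yfree (D2 g)"
proof -
  assume g: "yfree g"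
  have "yfree (D_alpha g)" using D_yfree[OF g] .
  then have "\<forall>k. dY k (hf * D2 g) = 0" by (simp add: D_D2 yfree_def)
  then have "\<forall>k. hf * dY k (D2 g) = hf * 0" by (simp add: pderiv_const_mult)
  then show ?thesis unfolding yfree_def using hf_cancel by blast
qed
lemma yfree_bt[simp,intro]: "yfree bt" by simp
lemma yfree_La_e: "yfree g \<Longrightarrow> yfree (La_e m k g)"
  by (simp add: La_e_def yfree_D2 yfree_mult yfree_add yfree_dP del: of_nat_mult of_nat_add of_nat_diff)
lemma yfree_E_e: "yfree g \<Longrightarrow> yfree (E_e m k g)"
  by (simp add: E_e_def yfree_D2 yfree_mult yfree_add yfree_dP del: of_nat_mult of_nat_add of_nat_diff)

lemma vb_numeral[simp]: "vb N (numeral n)"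
  using vb_const[of N "numeral n"] by (simp add: const_def)

lemma vb_D2: assumes "vb M g" "1 \<le> M" shows "vb (2*M) (D2 g)"
proof -
  have bM: "bnd g \<le> M" by (rule vb_bnd[OF assms])
  have e: "D2 g = D2N M g" by (rule D2N_stable[symmetric, OF bM])
  have z: "\<And>i. M \<le> i \<Longrightarrow> dP i g = 0" using assms by (intro pderiv_vanish) auto
  have z2: "\<And>i j. M \<le> i \<or> M \<le> j \<Longrightarrow> dP i (dP j g) = 0"
    using assms z by (auto intro: pderiv_vanish vb_pderiv)
  have g2: "vb (2*M) g" using vb_mono[OF assms(1), of "2*M"] by simp
  have v: "\<And>i j. vb (2*M) (dP i (dP j g))" "\<And>i. vb (2*M) (dP i g)"
    using g2 by (auto intro!: vb_pderiv)
  have f1: "vb (2*M) (of_nat (i*j) * pp (i+j) * dP i (dP j g))" for i j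
  proof (cases "M \<le> i \<or> M \<le> j")
    case True then show ?thesis using z2 by simp
  next
    case False then show ?thesis by (intro vb_mult vb_var v) (auto simp del: of_nat_mult of_nat_add)
  qed
  have f2: "vb (2*M) (of_nat (i+j) * pp i * pp j * dP (i+j) g)" for i j
  proof (cases "M \<le> i + j")
    case True then show ?thesis using z by simp
  next
    case False then show ?thesis by (intro vb_mult vb_var v) (auto simp del: of_nat_mult of_nat_add)
  qed
  have f3: "vb (2*M) (of_nat (i*(i-1)) * pp i * dP i g)" for i
  proof (cases "M \<le> i")
    case True then show ?thesis using z by simp
  next
    case False then show ?thesis by (intro vb_mult vb_var v) (auto simp del: of_nat_mult of_nat_add)
  qed
  then have s1: "vb (2*M) (\<Sum>i\<in>{1..M}. \<Sum>j\<in>{1..M}. of_nat (i*j) * pp (i+j) * dP i (dP j g))"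
    and s2: "vb (2*M) (\<Sum>i\<in>{1..M}. \<Sum>j\<in>{1..M}. of_nat (i+j) * pp i * pp j * dP (i+j) g)"
    and s3: "vb (2*M) (\<Sum>i\<in>{1..M}. of_nat (i*(i-1)) * pp i * dP i g)"
    by (intro vb_sum f1 f2 f3)+
  show ?thesis unfolding e D2N_def
    by (intro vb_add vb_mult s1 s2 s3) simp_all
qed

lemma vb_La_e: "vb M g \<Longrightarrow> k < M \<Longrightarrow> vb M (La_e m k g)"
  by (auto simp: La_e_def intro!: vb_mult vb_pderiv vb_var vb_add simp del: of_nat_mult of_nat_add of_nat_diff)
lemma vb_E_e: assumes "vb M g" "1 \<le> M" "k < M" shows "vb (2*M) (E_e m k g)"
proof -
  have g2: "vb (2*M) g" using vb_mono[OF assms(1), of "2*M"] by simp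
  show ?thesis using assms g2 by (auto simp: E_e_def intro!: vb_mult vb_pderiv vb_var vb_add vb_D2 simp del: of_nat_mult of_nat_add of_nat_diff)
qed

lemma sum_split5:
  fixes k m N :: nat assumes "k < m" "m \<le> N"
  shows "(\<Sum>n\<in>{0..N}. F n) = (\<Sum>n\<in>{0..<k}. F n) + F k + (\<Sum>i\<in>{1..<m-k}. F (k + i)) + F m
     + (\<Sum>j\<in>{1..N-m}. F (m + j))"
proof -
  have "(\<Sum>n\<in>{0..N}. F n) = (\<Sum>n\<in>{0..<k}. F n) + F k + (\<Sum>n\<in>{Suc k..N}. F n)"
    by (rule sum_split3) (use assms in auto)
  also have "(\<Sum>n\<in>{Suc k..N}. F n) = (\<Sum>n\<in>{Suc k..<m}. F n) + (\<Sum>n\<in>{m..N}. F n)"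
  proof -
    have "{Suc k..N} = {Suc k..<m} \<union> {m..N}" using assms by auto
    moreover have "sum F ({Suc k..<m} \<union> {m..N}) = sum F {Suc k..<m} + sum F {m..N}"
      by (rule sum.union_disjoint) auto
    ultimately show ?thesis by simp
  qed
  also have "(\<Sum>n\<in>{m..N}. F n) = F m + (\<Sum>n\<in>{Suc m..N}. F n)"
    by (rule sum.atLeast_Suc_atMost) (use assms in auto)
  also have "(\<Sum>n\<in>{Suc m..N}. F n) = (\<Sum>j\<in>{1..N-m}. F (m + j))"
    using sum_shift[of m N F] assms by (simp add: add.commute)
  also have "(\<Sum>n\<in>{Suc k..<m}. F n) = (\<Sum>i\<in>{1..<m-k}. F (k + i))"
  proof -
    have "{Suc k..<m} = {1+k..<(m-k)+k}" using assms by auto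
    then have "(\<Sum>n\<in>{Suc k..<m}. F n) = (\<Sum>i\<in>{1..<m-k}. F (i + k))"
      by (simp only: sum.shift_bounds_nat_ivl)
    also have "\<dots> = (\<Sum>i\<in>{1..<m-k}. F (k + i))" by (rule sum.cong) (auto simp: add.commute)
    finally show ?thesis .
  qed
  finally show ?thesis by (simp add: add_ac)
qed

lemma sum_reflect:
  fixes d :: nat
  shows "(\<Sum>i\<in>{1..<d}. F i) = (\<Sum>i\<in>{1..<d}. F (d - i))"
proof (cases d)
  case 0 then show ?thesis by simp
next
  case (Suc d')
  have "{1..<d} = {1..d'}" using Suc by auto
  then have "(\<Sum>i\<in>{1..<d}. F i) = (\<Sum>i\<in>{1..d'}. F i)" by simp
  also have "\<dots> = (\<Sum>i\<in>{1..d'}. F (d' + 1 - i))" by (rule sum.atLeastAtMost_rev)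
  also have "\<dots> = (\<Sum>i\<in>{1..<d}. F (d - i))" using Suc \<open>{1..<d} = {1..d'}\<close> by simp
  finally show ?thesis .
qed

lemma sym_weight:
  fixes d :: nat and X :: "nat \<Rightarrow> 'a::comm_ring_1"
  assumes "\<And>i. 0 < i \<Longrightarrow> i < d \<Longrightarrow> X (d - i) = X i"
    and "\<And>i. 0 < i \<Longrightarrow> i < d \<Longrightarrow> w i + w (d - i) = c * v i"
  shows "2 * (\<Sum>i\<in>{1..<d}. of_nat (w i) * X i) = of_nat c * (\<Sum>i\<in>{1..<d}. of_nat (v i) * X i)"
proof -
  have "(\<Sum>i\<in>{1..<d}. of_nat (w i) * X i) = (\<Sum>i\<in>{1..<d}. of_nat (w (d - i)) * X (d - i))"
    by (rule sum_reflect)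
  also have "\<dots> = (\<Sum>i\<in>{1..<d}. of_nat (w (d - i)) * X i)"
    by (rule sum.cong) (use assms(1) in auto)
  finally have r: "(\<Sum>i\<in>{1..<d}. of_nat (w i) * X i) = (\<Sum>i\<in>{1..<d}. of_nat (w (d - i)) * X i)" .
  have "2 * (\<Sum>i\<in>{1..<d}. of_nat (w i) * X i)
      = (\<Sum>i\<in>{1..<d}. of_nat (w i) * X i) + (\<Sum>i\<in>{1..<d}. of_nat (w i) * X i)"
    by (rule mult_2)
  also have "\<dots> = (\<Sum>i\<in>{1..<d}. of_nat (w i) * X i) + (\<Sum>i\<in>{1..<d}. of_nat (w (d - i)) * X i)"
    by (subst (2) r) (rule refl)
  also have "\<dots> = (\<Sum>i\<in>{1..<d}. of_nat (w i) * X i + of_nat (w (d - i)) * X i)"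
    by (rule sum.distrib[symmetric])
  also have "\<dots> = (\<Sum>i\<in>{1..<d}. of_nat c * (of_nat (v i) * X i))"
  proof (rule sum.cong[OF refl])
    fix i assume "i \<in> {1..<d}"
    then have "w i + w (d - i) = c * v i" using assms(2) by auto
    then have "(of_nat (w i) + of_nat (w (d - i)) :: 'a) = of_nat c * of_nat (v i)"
      by (metis of_nat_add of_nat_mult)
    then show "of_nat (w i) * X i + of_nat (w (d - i)) * X i = of_nat c * (of_nat (v i) * X i)"
      by (simp add: distrib_right[symmetric] mult.assoc)
  qed
  also have "\<dots> = of_nat c * (\<Sum>i\<in>{1..<d}. of_nat (v i) * X i)"
    by (rule sum_distrib_left[symmetric])
  finally show ?thesis .
qed

lemma D2_scal1: "D2 ((1 + bt) * of_nat n * x) = (1 + bt) * of_nat n * D2 x"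
  by (simp add: mult.assoc D2_1bt D2_of_nat)
lemma D2_scal2: "D2 (bt * of_nat n * x) = bt * of_nat n * D2 x"
  by (simp add: mult.assoc D2_bt D2_of_nat)

lemma of_nat_nm1: "(of_nat (n * (n - 1)) :: 'a::comm_ring_1) = of_nat n * (of_nat n - 1)"
  by (cases n) (auto simp: algebra_simps)

lemma per_m_eq:
  assumes g: "yfree g"
  shows "E_e k n (La_e n k g) = La_e k n (E_e n k g)"
proof -
  consider "n < k" | "n = k" | "k < n" by linarith
  then show ?thesis
  proof cases
    case 1 then show ?thesis
      by (simp add: E_e_def La_e_def pderiv_mult algebra_simps del: of_nat_mult of_nat_add of_nat_diff)
         (simp add: algebra_simps)
  next
    case 2 then show ?thesis
      by (simp add: E_e_def La_e_def D2_scal2 del: of_nat_mult of_nat_add of_nat_diff)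
         (simp add: algebra_simps)
  next
    case 3 then show ?thesis
      by (simp add: E_e_def La_e_def pderiv_mult algebra_simps del: of_nat_mult of_nat_add of_nat_diff)
         (simp add: algebra_simps)
  qed
qed

lemma nat_sym1: "(i::nat) < d \<Longrightarrow> i*i*(d-i) + (d-i)*(d-i)*(d-(d-i)) = d*(i*(d-i))"
proof -
  assume "i < d"
  then obtain e where "d = i + e" by (metis less_imp_add_positive)
  then show ?thesis by (simp add: algebra_simps)
qed

lemma ring_gt:
  fixes b lo A Dd MR Q H HR :: "'a::comm_ring_1" and k d :: nat
  assumes "1 \<le> d"
  shows "lo + (1+b)*of_nat(2*k*d)*(b*of_nat k*A) + (MR + (1+b)*(1+b)*(of_nat d * Q))
     + ((1+b)*of_nat d*Dd + b*of_nat((k+d)*(k+d-1))*((1+b)*of_nat d*A)) + (HR + (1+b)*2*of_nat d*H)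
   = lo + (1+b)*of_nat d*(Dd + ((1+b)*Q + 2*H + b*(of_nat(d*(d-1))*A)) + b*of_nat(k*(k-1))*A) + MR
     + b*of_nat(k+d)*((1+b)*of_nat(2*k*d)*A) + HR"
  by (simp only: of_nat_nm1) (simp add: algebra_simps)

lemma per_m_gt:
  assumes g: "yfree g" and d: "1 \<le> d" and N: "k + d + bnd g + 1 \<le> N"
  shows "(\<Sum>n\<in>{0..N}. E_e (k+d) n (La_e n k g)) = (\<Sum>n\<in>{0..N}. La_e (k+d) n (E_e n k g))"
proof -
  have kN: "k < k + d" "k + d \<le> N" using d N by auto
  note sp = sum_split5[OF kN]
  have X: "\<And>i. dP (d-i) (dP i g) = dP i (dP (d-i) g)" by (rule pderiv_commute)
  define A where "A = dP d g"
  define Dd where "Dd = D2 (dP d g)"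
  define Q where "Q = (\<Sum>i\<in>{1..<d}. of_nat (i*(d-i)) * dP i (dP (d-i) g))"
  define W where "W = (\<Sum>i\<in>{1..<d}. of_nat (i*i*(d-i)) * dP i (dP (d-i) g))"
  define H where "H = (\<Sum>j\<in>{1..N}. of_nat (d+j) * pp j * dP (d+j) g)"
  define MR where "MR = (\<Sum>i\<in>{1..<d}. La_e (k+d) (k+i) (E_e (k+i) k g))"
  define HR where "HR = (\<Sum>j\<in>{1..N-(k+d)}. La_e (k+d) (k+d+j) (E_e (k+d+j) k g))"
  define lo where "lo = (\<Sum>n\<in>{0..<k}. La_e (k+d) n (E_e n k g))"
  have lo: "(\<Sum>n\<in>{0..<k}. E_e (k+d) n (La_e n k g)) = lo"
    unfolding lo_def
  proof (rule sum.cong[OF refl])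
    fix n assume "n \<in> {0..<k}"
    then have n: "n < k" by simp
    then obtain e where e: "k = n + e" "0 < e" by (metis less_imp_add_positive)
    have f: "k - n = e" "k + d - n = e + d" using e by auto
    show "E_e (k+d) n (La_e n k g) = La_e (k+d) n (E_e n k g)"
      using n d e f by (simp add: E_e_def La_e_def pderiv_mult del: of_nat_mult of_nat_add of_nat_diff)
        (simp add: algebra_simps)
  qed
  have Lk: "E_e (k+d) k (La_e k k g) = (1+bt) * of_nat (2*k*d) * (bt * of_nat k * A)"
    using d by (simp add: E_e_def La_e_def pderiv_mult A_def del: of_nat_mult of_nat_add of_nat_diff)
  have Lm: "E_e (k+d) (k+d) (La_e (k+d) k g) = (1+bt) * of_nat d * Dd + bt * of_nat ((k+d)*(k+d-1)) * ((1+bt) * of_nat d * A)"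
    using d by (simp add: E_e_def La_e_def D2_scal1 A_def Dd_def del: of_nat_mult of_nat_add of_nat_diff)
  have dD: "dP d (D2 g) = D2 (dP d g) + K2N N d g" by (rule dP_D2) (use d N in auto)
  have Rk: "La_e (k+d) k (E_e k k g) = (1+bt) * of_nat d * (Dd + ((1+bt)*Q + 2*H + bt*(of_nat(d*(d-1))*A)) + bt * of_nat (k*(k-1)) * A)"
    using d by (simp add: E_e_def La_e_def pderiv_mult pderiv_add dD K2N_def Q_def H_def A_def Dd_def del: of_nat_mult of_nat_add of_nat_diff)
  have Rm: "La_e (k+d) (k+d) (E_e (k+d) k g) = bt * of_nat (k+d) * ((1+bt) * of_nat (2*k*d) * A)"
    using d by (simp add: E_e_def La_e_def A_def del: of_nat_mult of_nat_add of_nat_diff)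
  have mid: "(\<Sum>i\<in>{1..<d}. E_e (k+d) (k+i) (La_e (k+i) k g)) = MR + (1+bt)*(1+bt)*(of_nat d * Q)"
  proof -
    have "(\<Sum>i\<in>{1..<d}. E_e (k+d) (k+i) (La_e (k+i) k g))
        = (\<Sum>i\<in>{1..<d}. La_e (k+d) (k+i) (E_e (k+i) k g) + (1+bt)*(1+bt)*(2*(of_nat (i*i*(d-i)) * dP i (dP (d-i) g))))"
    proof (rule sum.cong[OF refl])
      fix i assume "i \<in> {1..<d}"
      then have i: "0 < i" "i < d" by auto
      then obtain e where e: "d = i + e" "0 < e" by (metis less_imp_add_positive)
      have "E_e (k+d) (k+i) (La_e (k+i) k g) = (1+bt)*(1+bt)*(of_nat (2*(k+i)*e*i) * dP i (dP e g))"
        using i e X[of i] by (simp add: E_e_def La_e_def pderiv_mult pderiv_add del: of_nat_mult of_nat_add of_nat_diff)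
          (simp add: algebra_simps)
      moreover have "La_e (k+d) (k+i) (E_e (k+i) k g) = (1+bt)*(1+bt)*(of_nat (e*(2*k*i)) * dP i (dP e g))"
        using i e X[of i] by (simp add: E_e_def La_e_def pderiv_mult pderiv_add del: of_nat_mult of_nat_add of_nat_diff)
          (simp add: algebra_simps)
      moreover have "d - i = e" using e by simp
      ultimately show "E_e (k+d) (k+i) (La_e (k+i) k g) = La_e (k+d) (k+i) (E_e (k+i) k g) + (1+bt)*(1+bt)*(2*(of_nat (i*i*(d-i)) * dP i (dP (d-i) g)))"
        by (simp add: algebra_simps)
    qed
    also have "\<dots> = MR + (1+bt)*(1+bt)*(2*W)"
      by (simp add: MR_def W_def sum.distrib sum_distrib_left)
    also have "2*W = of_nat d * Q"
      unfolding W_def Q_def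
    proof (rule sym_weight)
      fix i assume i: "0 < i" "i < d"
      then have "d - (d - i) = i" by simp
      then show "dP (d - i) (dP (d - (d - i)) g) = dP i (dP (d - i) g)" using X[of i] by simp
      show "i*i*(d-i) + (d-i)*(d-i)*(d-(d-i)) = d*(i*(d-i))" by (rule nat_sym1[OF i(2)])
    qed
    finally show ?thesis .
  qed
  have hi: "(\<Sum>j\<in>{1..N-(k+d)}. E_e (k+d) (k+d+j) (La_e (k+d+j) k g)) = HR + (1+bt)*2*of_nat d*H"
  proof -
    have "(\<Sum>j\<in>{1..N-(k+d)}. E_e (k+d) (k+d+j) (La_e (k+d+j) k g))
       = (\<Sum>j\<in>{1..N-(k+d)}. La_e (k+d) (k+d+j) (E_e (k+d+j) k g) + (1+bt)*2*of_nat d*(of_nat (d+j) * pp j * dP (d+j) g))"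
    proof (rule sum.cong[OF refl])
      fix j assume "j \<in> {1..N-(k+d)}"
      then have j: "0 < j" by auto
      show "E_e (k+d) (k+d+j) (La_e (k+d+j) k g) = La_e (k+d) (k+d+j) (E_e (k+d+j) k g) + (1+bt)*2*of_nat d*(of_nat (d+j) * pp j * dP (d+j) g)"
        using j by (simp add: E_e_def La_e_def del: of_nat_mult of_nat_add of_nat_diff)
          (simp add: algebra_simps)
    qed
    also have "\<dots> = HR + (1+bt)*2*of_nat d*(\<Sum>j\<in>{1..N-(k+d)}. of_nat (d+j) * pp j * dP (d+j) g)"
      by (simp add: HR_def sum.distrib sum_distrib_left)
    also have "(\<Sum>j\<in>{1..N-(k+d)}. of_nat (d+j) * pp j * dP (d+j) g) = H"
      unfolding H_def by (rule sum_stable[symmetric]) (use N in \<open>auto simp: dP_big\<close>)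
    finally show ?thesis .
  qed
  have "(\<Sum>n\<in>{0..N}. E_e (k+d) n (La_e n k g)) =
     lo + (1+bt) * of_nat (2*k*d) * (bt * of_nat k * A) + (MR + (1+bt)*(1+bt)*(of_nat d * Q))
     + ((1+bt) * of_nat d * Dd + bt * of_nat ((k+d)*(k+d-1)) * ((1+bt) * of_nat d * A)) + (HR + (1+bt)*2*of_nat d*H)"
    using sp[of "\<lambda>n. E_e (k+d) n (La_e n k g)"] lo Lk Lm mid hi by simp
  also have "\<dots> = lo + (1+bt) * of_nat d * (Dd + ((1+bt)*Q + 2*H + bt*(of_nat(d*(d-1))*A)) + bt * of_nat (k*(k-1)) * A) + MR
     + bt * of_nat (k+d) * ((1+bt) * of_nat (2*k*d) * A) + HR"
    by (rule ring_gt[OF d])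
  also have "\<dots> = (\<Sum>n\<in>{0..N}. La_e (k+d) n (E_e n k g))"
    using sp[of "\<lambda>n. La_e (k+d) n (E_e n k g)"] Rk Rm unfolding lo_def MR_def HR_def by simp
  finally show ?thesis .
qed

lemma ring_lt:
  fixes b lo X X' G P Mid HL ::  "'a::comm_ring_1" and m d :: nat
  assumes "1 \<le> d"
  shows "lo + (X' + (2*(1+b)*G + of_nat d * P + b*(of_nat(d*(d-1)) * X)) + b*of_nat(m*(m-1))*X) + Mid
      + of_nat(2*m)*(b*of_nat(m+d)*X) + HL
   = lo + b*of_nat m*(of_nat(2*m)*X) + (Mid + of_nat d * P) + (X' + b*of_nat((m+d)*(m+d-1)) * X) + (HL + (1+b)*2*G)"
  by (simp only: of_nat_nm1) (simp add: algebra_simps)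

lemma per_m_lt:
  assumes g: "yfree g" and d: "1 \<le> d" and N: "m + d + bnd g + 1 \<le> N"
  shows "(\<Sum>n\<in>{0..N}. E_e m n (La_e n (m+d) g)) = (\<Sum>n\<in>{0..N}. La_e m n (E_e n (m+d) g))"
proof -
  have kN: "m < m + d" "m + d \<le> N" using d N by auto
  note sp = sum_split5[OF kN]
  define X where "X = pp d * g"
  define G where "G = (\<Sum>i\<in>{1..N}. of_nat (i*d) * pp (i+d) * dP i g)"
  define P where "P = (\<Sum>i\<in>{1..<d}. pp i * pp (d-i) * g)"
  define W where "W = (\<Sum>i\<in>{1..<d}. of_nat i * (pp i * pp (d-i) * g))"
  define Mid where "Mid = (\<Sum>i\<in>{1..<d}. E_e m (m+i) (La_e (m+i) (m+d) g))"
  define HL where "HL = (\<Sum>j\<in>{1..N-(m+d)}. E_e m (m+d+j) (La_e (m+d+j) (m+d) g))"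
  define lo where "lo = (\<Sum>n\<in>{0..<m}. E_e m n (La_e n (m+d) g))"
  have lo: "(\<Sum>n\<in>{0..<m}. La_e m n (E_e n (m+d) g)) = lo"
    unfolding lo_def
  proof (rule sum.cong[OF refl])
    fix n assume "n \<in> {0..<m}"
    then have n: "n < m" by simp
    then obtain e where e: "m = n + e" "0 < e" by (metis less_imp_add_positive)
    have f: "m - n = e" "m + d - n = e + d" using e by auto
    show "La_e m n (E_e n (m+d) g) = E_e m n (La_e n (m+d) g)"
      using n d e f by (simp add: E_e_def La_e_def pderiv_mult pderiv_add del: of_nat_mult of_nat_add of_nat_diff,
        (simp add: algebra_simps)?)
  qed
  have C: "D2 (pp d * g) = pp d * D2 g + C2N N d g" by (rule D2_pp) (use d N in auto)
  have Lm: "E_e m m (La_e m (m+d) g) = pp d * D2 g + (2*(1+bt)*G + of_nat d * P + bt*(of_nat(d*(d-1)) * X)) + bt*of_nat(m*(m-1))*X"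
    using d by (simp add: E_e_def La_e_def C C2N_def G_def P_def X_def del: of_nat_mult of_nat_add of_nat_diff)
  have Rm: "La_e m m (E_e m (m+d) g) = bt*of_nat m*(of_nat(2*m)*X)"
    using d by (simp add: E_e_def La_e_def X_def del: of_nat_mult of_nat_add of_nat_diff)
  have Lk: "E_e m (m+d) (La_e (m+d) (m+d) g) = of_nat(2*m)*(bt*of_nat(m+d)*X)"
    using d by (simp add: E_e_def La_e_def X_def del: of_nat_mult of_nat_add of_nat_diff,
      (simp add: algebra_simps)?)
  have Rk: "La_e m (m+d) (E_e (m+d) (m+d) g) = pp d * D2 g + bt*of_nat((m+d)*(m+d-1)) * X"
    using d by (simp add: E_e_def La_e_def X_def del: of_nat_mult of_nat_add of_nat_diff,
      (simp add: algebra_simps)?)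
  have mid: "(\<Sum>i\<in>{1..<d}. La_e m (m+i) (E_e (m+i) (m+d) g)) = Mid + of_nat d * P"
  proof -
    have "(\<Sum>i\<in>{1..<d}. La_e m (m+i) (E_e (m+i) (m+d) g))
        = (\<Sum>i\<in>{1..<d}. E_e m (m+i) (La_e (m+i) (m+d) g) + 2 * (of_nat i * (pp i * pp (d-i) * g)))"
    proof (rule sum.cong[OF refl])
      fix i assume "i \<in> {1..<d}"
      then have i: "0 < i" "i < d" by auto
      then obtain e where e: "d = i + e" "0 < e" by (metis less_imp_add_positive)
      have f: "d - i = e" using e by simp
      show "La_e m (m+i) (E_e (m+i) (m+d) g) = E_e m (m+i) (La_e (m+i) (m+d) g) + 2 * (of_nat i * (pp i * pp (d-i) * g))"
        using i e f by (simp add: E_e_def La_e_def del: of_nat_mult of_nat_add of_nat_diff,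
          (simp add: algebra_simps)?)
    qed
    also have "\<dots> = Mid + 2*W"
      by (simp add: Mid_def W_def sum.distrib sum_distrib_left)
    also have "2*W = of_nat d * P"
    proof -
      have "2*W = of_nat d * (\<Sum>i\<in>{1..<d}. of_nat 1 * (pp i * pp (d-i) * g))"
        unfolding W_def
      proof (rule sym_weight)
        fix i assume i: "0 < i" "i < d"
        then have "d - (d - i) = i" by simp
        then show "pp (d - i) * pp (d - (d - i)) * g = pp i * pp (d - i) * g" by (simp add: mult_ac)
        show "i + (d - i) = d * 1" using i by simp
      qed
      then show ?thesis by (simp add: P_def)
    qed
    finally show ?thesis .
  qed
  have hi: "(\<Sum>j\<in>{1..N-(m+d)}. La_e m (m+d+j) (E_e (m+d+j) (m+d) g)) = HL + (1+bt)*2*G"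
  proof -
    have "(\<Sum>j\<in>{1..N-(m+d)}. La_e m (m+d+j) (E_e (m+d+j) (m+d) g))
       = (\<Sum>j\<in>{1..N-(m+d)}. E_e m (m+d+j) (La_e (m+d+j) (m+d) g) + (1+bt)*2*(of_nat (j*d) * pp (j+d) * dP j g))"
    proof (rule sum.cong[OF refl])
      fix j assume "j \<in> {1..N-(m+d)}"
      then have j: "0 < j" by auto
      show "La_e m (m+d+j) (E_e (m+d+j) (m+d) g) = E_e m (m+d+j) (La_e (m+d+j) (m+d) g) + (1+bt)*2*(of_nat (j*d) * pp (j+d) * dP j g)"
        using j by (simp add: E_e_def La_e_def del: of_nat_mult of_nat_add of_nat_diff,
          (simp add: algebra_simps)?)
    qed
    also have "\<dots> = HL + (1+bt)*2*(\<Sum>j\<in>{1..N-(m+d)}. of_nat (j*d) * pp (j+d) * dP j g)"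
      by (simp add: HL_def sum.distrib sum_distrib_left)
    also have "(\<Sum>j\<in>{1..N-(m+d)}. of_nat (j*d) * pp (j+d) * dP j g) = G"
      unfolding G_def by (rule sum_stable[symmetric]) (use N in \<open>auto simp: dP_big\<close>)
    finally show ?thesis .
  qed
  have "(\<Sum>n\<in>{0..N}. E_e m n (La_e n (m+d) g)) =
     lo + (pp d * D2 g + (2*(1+bt)*G + of_nat d * P + bt*(of_nat(d*(d-1)) * X)) + bt*of_nat(m*(m-1))*X) + Mid
      + of_nat(2*m)*(bt*of_nat(m+d)*X) + HL"
    using sp[of "\<lambda>n. E_e m n (La_e n (m+d) g)"] Lm Lk unfolding lo_def Mid_def HL_def by simp
  also have "\<dots> = lo + bt*of_nat m*(of_nat(2*m)*X) + (Mid + of_nat d * P) + (pp d * D2 g + bt*of_nat((m+d)*(m+d-1)) * X) + (HL + (1+bt)*2*G)"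
    by (rule ring_lt[OF d])
  also have "\<dots> = (\<Sum>n\<in>{0..N}. La_e m n (E_e n (m+d) g))"
    using sp[of "\<lambda>n. La_e m n (E_e n (m+d) g)"] lo Rm Rk mid hi by simp
  finally show ?thesis .
qed

lemma per_m:
  assumes g: "yfree g" and N: "k + bnd g \<le> N"
  shows "(\<Sum>n\<in>{0..N}. E_e m n (La_e n k g)) = (\<Sum>n\<in>{0..N}. La_e m n (E_e n k g))"
proof -
  let ?N = "N + m + k + bnd g + 1"
  have z1: "(\<Sum>n\<in>{0..?N}. E_e m n (La_e n k g)) = (\<Sum>n\<in>{0..N}. E_e m n (La_e n k g))"
    by (rule sum_stable) (use N in \<open>auto simp: La_e_big\<close>)
  have z2: "(\<Sum>n\<in>{0..?N}. La_e m n (E_e n k g)) = (\<Sum>n\<in>{0..N}. La_e m n (E_e n k g))"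
    by (rule sum_stable) (use N in \<open>auto simp: E_e_big\<close>)
  have "(\<Sum>n\<in>{0..?N}. E_e m n (La_e n k g)) = (\<Sum>n\<in>{0..?N}. La_e m n (E_e n k g))"
  proof -
    consider "m = k" | "k < m" | "m < k" by linarith
    then show ?thesis
    proof cases
      case 1 then show ?thesis using per_m_eq[OF g] by simp
    next
      case 2
      define d where "d = m - k"
      have d: "m = k + d" "1 \<le> d" using 2 by (auto simp: d_def)
      show ?thesis unfolding d(1) by (rule per_m_gt[OF g d(2)]) (use d in auto)
    next
      case 3
      define d where "d = k - m"
      have d: "k = m + d" "1 \<le> d" using 3 by (auto simp: d_def)
      show ?thesis unfolding d(1) by (rule per_m_lt[OF g d(2)]) (use d in auto)
    qed
  qed
  then show ?thesis using z1 z2 by simp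
qed

lemma bnd_La_e: "k + bnd g \<le> N \<Longrightarrow> bnd (La_e n k g) \<le> N"
  using bnd_ge1[of g] by (intro vb_bnd vb_La_e) (auto intro: vb_bndI)
lemma bnd_E_e: "k + bnd g \<le> N \<Longrightarrow> bnd (E_e n k g) \<le> 2*N"
  using bnd_ge1[of g] by (intro vb_bnd vb_E_e) (auto intro: vb_bndI)

lemma ident1_yy:
  assumes g: "yfree g"
  shows "E2 (Lambda_Y (yy k * g)) = Lambda_Y (E2 (yy k * g))"
proof -
  define N where "N = k + bnd g"
  have N: "k + bnd g \<le> N" by (simp add: N_def)
  have N1: "1 \<le> N" using bnd_ge1[of g] by (simp add: N_def)
  have "E2 (Lambda_Y (yy k * g)) = (\<Sum>n\<in>{0..N}. E2 (yy n * La_e n k g))"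
    by (simp add: La_col[OF g N] lin_sum[OF lin_E2])
  also have "\<dots> = (\<Sum>n\<in>{0..N}. \<Sum>m\<in>{0..3*N}. yy m * E_e m n (La_e n k g))"
  proof (rule sum.cong[OF refl])
    fix n assume n: "n \<in> {0..N}"
    have "n + bnd (La_e n k g) \<le> 3*N" using bnd_La_e[OF N, of n] n by auto
    then show "E2 (yy n * La_e n k g) = (\<Sum>m\<in>{0..3*N}. yy m * E_e m n (La_e n k g))"
      by (rule E_col[OF yfree_La_e[OF g]])
  qed
  also have "\<dots> = (\<Sum>m\<in>{0..3*N}. yy m * (\<Sum>n\<in>{0..N}. E_e m n (La_e n k g)))"
    by (subst sum.swap) (simp add: sum_distrib_left)
  also have "\<dots> = (\<Sum>m\<in>{0..3*N}. yy m * (\<Sum>n\<in>{0..N}. La_e m n (E_e n k g)))"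
    by (simp add: per_m[OF g N])
  also have "\<dots> = (\<Sum>n\<in>{0..N}. \<Sum>m\<in>{0..3*N}. yy m * La_e m n (E_e n k g))"
    by (subst sum.swap) (simp add: sum_distrib_left)
  also have "\<dots> = (\<Sum>n\<in>{0..N}. Lambda_Y (yy n * E_e n k g))"
  proof (rule sum.cong[OF refl])
    fix n assume n: "n \<in> {0..N}"
    have "n + bnd (E_e n k g) \<le> 3*N" using bnd_E_e[OF N, of n] n by auto
    then show "(\<Sum>m\<in>{0..3*N}. yy m * La_e m n (E_e n k g)) = Lambda_Y (yy n * E_e n k g)"
      by (rule La_col[OF yfree_E_e[OF g], symmetric])
  qed
  also have "\<dots> = Lambda_Y (E2 (yy k * g))"
    by (simp add: E_col[OF g N] lin_sum[OF lin_La])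
  finally show ?thesis .
qed

lemma E_e_shift: "E_e (Suc m) (Suc k) g = E_e m k g + 2 * La_e m k g"
proof -
  consider "k < m" | "m < k" | "m = k" by linarith
  then show ?thesis
  proof cases
    case 1
    define d where "d = m - k"
    have "m = k + d" using 1 by (auto simp: d_def)
    then show ?thesis using 1 by (simp add: E_e_def La_e_def del: of_nat_mult of_nat_add of_nat_diff)
      (simp add: algebra_simps)
  next
    case 2
    then show ?thesis by (simp add: E_e_def La_e_def del: of_nat_mult of_nat_add of_nat_diff)
      (simp add: algebra_simps)
  next
    case 3
    then show ?thesis by (simp add: E_e_def La_e_def del: of_nat_mult of_nat_add of_nat_diff, (simp only: of_nat_nm1)?)
      (simp add: algebra_simps)
  qed
qed

lemma ident2_yy:
  assumes g: "yfree g"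
  shows "E2 (Y_plus (yy k * g)) - Y_plus (E2 (yy k * g)) = 2 * Y_plus (Lambda_Y (yy k * g))"
proof -
  define N where "N = k + bnd g"
  have N: "k + bnd g \<le> N" by (simp add: N_def)
  have N': "Suc k + bnd g \<le> Suc N" by (simp add: N_def)
  have "E2 (Y_plus (yy k * g)) = (\<Sum>m\<in>{0..Suc N}. yy m * E_e m (Suc k) g)"
    using E_col[OF g N'] by (simp add: Yp_yy[OF g])
  also have "\<dots> = yy 0 * E_e 0 (Suc k) g + (\<Sum>m\<in>{0..N}. yy (Suc m) * E_e (Suc m) (Suc k) g)"
    by (subst sum.atLeast0_atMost_Suc_shift) (simp add: comp_def)
  also have "yy 0 * E_e 0 (Suc k) g = 0" by (simp add: E_e_def)
  also have "(\<Sum>m\<in>{0..N}. yy (Suc m) * E_e (Suc m) (Suc k) g)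
     = (\<Sum>m\<in>{0..N}. yy (m+1) * E_e m k g) + 2 * (\<Sum>m\<in>{0..N}. yy (m+1) * La_e m k g)"
    by (simp add: E_e_shift distrib_left sum.distrib sum_distrib_left mult.left_commute)
  also have "(\<Sum>m\<in>{0..N}. yy (m+1) * E_e m k g) = Y_plus (E2 (yy k * g))"
    by (simp add: E_col[OF g N] lin_sum[OF lin_Yp] Yp_yy[OF yfree_E_e[OF g]])
  also have "(\<Sum>m\<in>{0..N}. yy (m+1) * La_e m k g) = Y_plus (Lambda_Y (yy k * g))"
    by (simp add: La_col[OF g N] lin_sum[OF lin_Yp] Yp_yy[OF yfree_La_e[OF g]])
  finally show ?thesis by simp
qed

lemma ident3_yy:
  assumes g: "yfree g"
  shows "Theta_Y (E2 (yy k * g)) = D2 (Theta_Y (yy k * g))"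
proof -
  define N where "N = k + bnd g"
  have N: "k + bnd g \<le> N" by (simp add: N_def)
  have kN: "k \<le> N" using N by simp
  have L: "Theta_Y (E2 (yy k * g)) = (\<Sum>m\<in>{0..N}. if 1 \<le> m then pp m * E_e m k g else 0)"
    by (simp add: E_col[OF g N] lin_sum[OF lin_Theta] Theta_yy[OF yfree_E_e[OF g]])
  show ?thesis
  proof (cases "k = 0")
    case True
    have "(\<Sum>m\<in>{0..N}. if 1 \<le> m then pp m * E_e m k g else 0) = 0"
      by (rule sum.neutral) (auto simp: True E_e_def)
    then show ?thesis unfolding L using True by (simp add: Theta_yy[OF g])
  next
    case False
    then have k1: "1 \<le> k" by simp
    define G where "G = (\<Sum>i\<in>{1..N}. of_nat (i*k) * pp (i+k) * dP i g)"
    define P where "P = (\<Sum>i\<in>{1..<k}. pp i * pp (k-i) * g)"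
    have R: "D2 (Theta_Y (yy k * g)) = pp k * D2 g + (2*(1+bt)*G + of_nat k * P + bt*(of_nat(k*(k-1)) * pp k * g))"
      using k1 by (simp add: Theta_yy[OF g] D2_pp[OF k1 N] C2N_def G_def P_def)
    have lo: "(\<Sum>m\<in>{0..<k}. if 1 \<le> m then pp m * E_e m k g else 0) = of_nat k * P"
    proof -
      have "(\<Sum>m\<in>{0..<k}. if 1 \<le> m then pp m * E_e m k g else 0) = (\<Sum>m\<in>{1..<k}. if 1 \<le> m then pp m * E_e m k g else 0)"
        by (rule sum_zero_first) simp
      also have "\<dots> = 2 * (\<Sum>m\<in>{1..<k}. of_nat m * (pp m * pp (k-m) * g))"
        by (simp add: sum_distrib_left E_e_def mult_ac)
      also have "\<dots> = of_nat k * (\<Sum>i\<in>{1..<k}. of_nat 1 * (pp i * pp (k-i) * g))"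
      proof (rule sym_weight)
        fix i assume i: "0 < i" "i < k"
        then have "k - (k - i) = i" by simp
        then show "pp (k - i) * pp (k - (k - i)) * g = pp i * pp (k - i) * g" by (simp add: mult_ac)
        show "i + (k - i) = k * 1" using i by simp
      qed
      finally show ?thesis by (simp add: P_def)
    qed
    have hi: "(\<Sum>m\<in>{Suc k..N}. if 1 \<le> m then pp m * E_e m k g else 0) = 2*(1+bt)*G"
    proof -
      have "(\<Sum>m\<in>{Suc k..N}. if 1 \<le> m then pp m * E_e m k g else 0)
          = (\<Sum>j\<in>{1..N-k}. if 1 \<le> j + k then pp (j+k) * E_e (j+k) k g else 0)"
        by (rule sum_shift[OF kN])
      also have "\<dots> = (\<Sum>j\<in>{1..N-k}. 2*(1+bt)*(of_nat (j*k) * pp (j+k) * dP j g))"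
        by (rule sum.cong[OF refl]) (auto simp: E_e_def algebra_simps)
      also have "\<dots> = 2*(1+bt)*(\<Sum>j\<in>{1..N-k}. of_nat (j*k) * pp (j+k) * dP j g)"
        by (simp add: sum_distrib_left)
      also have "(\<Sum>j\<in>{1..N-k}. of_nat (j*k) * pp (j+k) * dP j g) = G"
        unfolding G_def by (rule sum_stable[symmetric]) (use N in \<open>auto simp: dP_big\<close>)
      finally show ?thesis .
    qed
    have mid: "(if 1 \<le> k then pp k * E_e k k g else 0) = pp k * D2 g + bt*(of_nat(k*(k-1)) * pp k * g)"
      using k1 by (simp add: E_e_def algebra_simps del: of_nat_mult of_nat_diff)
    show ?thesis unfolding L R sum_split3[OF kN] lo hi mid by (simp add: algebra_simps)
  qed
qed

abbreviation EE :: "mpoly \<Rightarrow> mpoly" where "EE f \<equiv> D_alpha f + D'_alpha f"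

lemma EE_E2: "EE f = hf * E2 f" by (simp add: D_D2 D'_D'2 E2_def distrib_left)
lemma lin_EE: "lin (\<lambda>f. EE f)" by (rule lin_plus[OF lin_D lin_D'])

lemma T1_zero: assumes "f \<in> PY" shows "EE (Lambda_Y f) - Lambda_Y (EE f) = 0"
proof (rule PY_reduce[OF assms, where T = "\<lambda>f. EE (Lambda_Y f) - Lambda_Y (EE f)"])
  show "lin (\<lambda>f. EE (Lambda_Y f) - Lambda_Y (EE f))"
    by (rule lin_minus[OF lin_comp[OF lin_EE lin_La] lin_comp[OF lin_La lin_EE]])
next
  fix g assume g: "yfree g"
  show "EE (Lambda_Y g) - Lambda_Y (EE g) = 0"
    using g by (simp add: La_yfree D'_yfree La_yfree[OF D_yfree[OF g]] lin_zero[OF lin_D] lin_zero[OF lin_D'])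
next
  fix g k assume g: "yfree g"
  show "EE (Lambda_Y (yy k * g)) - Lambda_Y (EE (yy k * g)) = 0"
    by (simp add: EE_E2 lin_cmult[OF lin_La] ident1_yy[OF g])
qed

lemma T2_zero: assumes "f \<in> PY" shows "EE (Y_plus f) - Y_plus (EE f) - Y_plus (Lambda_Y f) = 0"
proof (rule PY_reduce[OF assms, where T = "\<lambda>f. EE (Y_plus f) - Y_plus (EE f) - Y_plus (Lambda_Y f)"])
  show "lin (\<lambda>f. EE (Y_plus f) - Y_plus (EE f) - Y_plus (Lambda_Y f))"
    by (rule lin_minus[OF lin_minus[OF lin_comp[OF lin_EE lin_Yp] lin_comp[OF lin_Yp lin_EE]] lin_comp[OF lin_Yp lin_La]])
next
  fix g assume g: "yfree g"
  show "EE (Y_plus g) - Y_plus (EE g) - Y_plus (Lambda_Y g) = 0"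
    using g by (simp add: Yp_yfree La_yfree D'_yfree Yp_yfree[OF D_yfree[OF g]] lin_zero[OF lin_D] lin_zero[OF lin_D'] lin_zero[OF lin_Yp])
next
  fix g k assume g: "yfree g"
  have "EE (Y_plus (yy k * g)) - Y_plus (EE (yy k * g)) = hf * (E2 (Y_plus (yy k * g)) - Y_plus (E2 (yy k * g)))"
    by (simp add: EE_E2 lin_cmult[OF lin_Yp] right_diff_distrib)
  also have "\<dots> = Y_plus (Lambda_Y (yy k * g))" by (simp add: ident2_yy[OF g] hf_two)
  finally show "EE (Y_plus (yy k * g)) - Y_plus (EE (yy k * g)) - Y_plus (Lambda_Y (yy k * g)) = 0" by simp
qed

lemma T3_zero: assumes "f \<in> PY" shows "Theta_Y (EE f) - D_alpha (Theta_Y f) = 0"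
proof (rule PY_reduce[OF assms, where T = "\<lambda>f. Theta_Y (EE f) - D_alpha (Theta_Y f)"])
  show "lin (\<lambda>f. Theta_Y (EE f) - D_alpha (Theta_Y f))"
    by (rule lin_minus[OF lin_comp[OF lin_Theta lin_EE] lin_comp[OF lin_D lin_Theta]])
next
  fix g assume g: "yfree g"
  show "Theta_Y (EE g) - D_alpha (Theta_Y g) = 0"
    using g by (simp add: Theta_yfree D'_yfree Theta_yfree[OF D_yfree[OF g]] lin_zero[OF lin_D])
next
  fix g k assume g: "yfree g"
  show "Theta_Y (EE (yy k * g)) - D_alpha (Theta_Y (yy k * g)) = 0"
    unfolding EE_E2 by (simp add: D_D2 lin_cmult[OF lin_Theta] ident3_yy[OF g])
qed

theorem lemma4p13:
  fixes f :: mpoly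
  assumes "f \<in> PY"
  shows "commutator (\<lambda>g. D_alpha g + D'_alpha g) Lambda_Y f = 0
       \<and> commutator (\<lambda>g. D_alpha g + D'_alpha g) Y_plus f = Y_plus (Lambda_Y f)
       \<and> Theta_Y (D_alpha f + D'_alpha f) = D_alpha (Theta_Y f)"
  using T1_zero[OF assms] T2_zero[OF assms] T3_zero[OF assms]
  unfolding commutator_def by simp

end
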